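(* Let $d\ge 2$. If $G_P$ is a finitely constrained subgroup of $\mathrm{Aut}(X^* )$ defined by patterns of size $d$ with $\mathrm{Hdim}(G_P)=1-\frac{2}{2^{d-1}}$, then $G_P$ has additive portraits.
   Context: Let $X=\{0,1\}$ and let $X^*$ be the set of finite words over $X$, viewed as the rooted binary tree. $G=\mathrm{Aut}(X^* )$, and $G(d)$ is the automorphism group of the finite tree of words of length $\le d$. For $g\in G$ and $w\in X^*$ the section $g_w$ is defined by $g(wv)=g(w)g_w(v)$ (finite sections of elements of $G(d)$ likewise). $\pi_k$ denotes restriction to words of length $\le k$. $C_2=\{\mathrm{id},\sigma\}$ is written additively; $\alpha(g)=\sigma$ if $g(0)=1$ and $\mathrm{id}$ otherwise, and $\alpha_{(w)}(g)=\alpha(g_w)$. A subgroup $P\le G(d)$ is an essential pattern group if for every $p\in P$ and $i\in\{0,1\}$ there is $q\in P$ with $\pi_{d-1}(q)=p_i$; then $G_P=\{g\in G:\pi_d(g_w)\in P\ \forall w\in X^*\}$. Such groups are finitely constrained; defined by patterns of size $d$ means $d$ is minimal. $\mathrm{Hdim}(K)=\liminf_n \log_2|K(n)|/\log_2|G(n)|$ with $K(n)=\pi_n(K)$. The portrait map $\rho:G\to C_2^{X^*}$ is $\rho(g)_{(w)}=\alpha_{(w)}(g)$. A subgroup $H\le G$ has additive portraits if $\rho(H)$ is a subgroup of $C_2^{X^*}$ under pointwise addition. *)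

theory Defs
  imports "HOL-Library.Z2" "HOL-Library.Extended_Real" "HOL-Library.Sublist"
begin

text \<open>Words over X = {0,1} are bool lists (False = 0, True = 1). Elements of the finite group G(d) are
  represented by functions on all words that act as a tree automorphism on the words
  of length at most d and are the identity on longer words.\<close>

definition aut :: "(bool list \<Rightarrow> bool list) set" where
  "aut = {g. bij g \<and> (\<forall>w. length (g w) = length w)
             \<and> (\<forall>u v. prefix u v \<longrightarrow> prefix (g u) (g v))}"

definition words_le :: "nat \<Rightarrow> bool list set" where
  "words_le d = {w. length w \<le> d}"

definition aut_fin :: "nat \<Rightarrow> (bool list \<Rightarrow> bool list) set" where
  "aut_fin d = {p. bij_betw p (words_le d) (words_le d)
                  \<and> (\<forall>w. length (p w) = length w)
                  \<and> (\<forall>u v. length v \<le> d \<longrightarrow> prefix u v \<longrightarrow> prefix (p u) (p v))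
                  \<and> (\<forall>w. d < length w \<longrightarrow> p w = w)}"

definition restr :: "nat \<Rightarrow> (bool list \<Rightarrow> bool list) \<Rightarrow> (bool list \<Rightarrow> bool list)" where
  "restr k g = (\<lambda>w. if length w \<le> k then g w else w)"

text \<open>section: g(wv) = g(w) g_w(v)\<close>
definition sec :: "(bool list \<Rightarrow> bool list) \<Rightarrow> bool list \<Rightarrow> (bool list \<Rightarrow> bool list)" where
  "sec g w = (\<lambda>v. drop (length w) (g (w @ v)))"

definition subgroup_of_fin :: "nat \<Rightarrow> (bool list \<Rightarrow> bool list) set \<Rightarrow> bool" where
  "subgroup_of_fin d P \<longleftrightarrow> P \<subseteq> aut_fin d \<and> id \<in> P
     \<and> (\<forall>p\<in>P. \<forall>q\<in>P. p \<circ> q \<in> P) \<and> (\<forall>p\<in>P. inv p \<in> P)"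

definition essential_pattern_group :: "nat \<Rightarrow> (bool list \<Rightarrow> bool list) set \<Rightarrow> bool" where
  "essential_pattern_group d P \<longleftrightarrow> 1 \<le> d \<and> subgroup_of_fin d P
     \<and> (\<forall>p\<in>P. \<forall>i::bool. \<exists>q\<in>P. restr (d - 1) q = restr (d - 1) (sec p [i]))"

definition GP :: "nat \<Rightarrow> (bool list \<Rightarrow> bool list) set \<Rightarrow> (bool list \<Rightarrow> bool list) set" where
  "GP d P = {g \<in> aut. \<forall>w. restr d (sec g w) \<in> P}"

definition defined_by_patterns_of_size :: "nat \<Rightarrow> (bool list \<Rightarrow> bool list) set \<Rightarrow> bool" where
  "defined_by_patterns_of_size d K \<longleftrightarrow>
     (\<exists>P. essential_pattern_group d P \<and> K = GP d P)
     \<and> (\<forall>d' P'. d' < d \<longrightarrow> essential_pattern_group d' P' \<longrightarrow> K \<noteq> GP d' P')"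

definition Hdim :: "(bool list \<Rightarrow> bool list) set \<Rightarrow> ereal" where
  "Hdim K = liminf (\<lambda>n. ereal (log 2 (real (card (restr n ` K)))
                               / log 2 (real (card (aut_fin n)))))"

text \<open>portrait with values in C_2 = bit (additive, 1 = sigma)\<close>
definition alpha :: "(bool list \<Rightarrow> bool list) \<Rightarrow> bit" where
  "alpha g = (if g [False] = [True] then 1 else 0)"

definition portrait :: "(bool list \<Rightarrow> bool list) \<Rightarrow> (bool list \<Rightarrow> bit)" where
  "portrait g = (\<lambda>w. alpha (sec g w))"

definition additive_portraits :: "(bool list \<Rightarrow> bool list) set \<Rightarrow> bool" where
  "additive_portraits H \<longleftrightarrow> (\<lambda>w. 0) \<in> portrait ` H
     \<and> (\<forall>a\<in>portrait ` H. \<forall>b\<in>portrait ` H. (\<lambda>w. a w + b w) \<in> portrait ` H)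
     \<and> (\<forall>a\<in>portrait ` H. (\<lambda>w. - a w) \<in> portrait ` H)"

end

theory Submission
  imports Defs "HOL-Library.FuncSet"
begin

declare add_bit_eq_xor[simp del] mult_bit_eq_and[simp del]

lemma bit_cases2: "(x::bit) = 0 \<or> x = 1" by (cases x) auto

lemma bit_add_self[simp]: "(x::bit) + x = 0"
  using bit_cases2[of x] by auto

lemma bit_add_self2[simp]: "(x::bit) + (x + y) = y"
  by (metis add.assoc add_0 bit_add_self)

lemma bit_minus[simp]: "- (x::bit) = x"
  using bit_cases2[of x] by auto

fun act :: "(bool list \<Rightarrow> bit) \<Rightarrow> bool list \<Rightarrow> bool list" where
  "act f [] = []"
| "act f (x#w) = (x \<noteq> (f [] = 1)) # act (\<lambda>v. f (x#v)) w"

lemma length_act[simp]: "length (act f w) = length w"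
  by (induction w arbitrary: f) auto

lemma act_append: "act f (u @ v) = act f u @ act (\<lambda>z. f (u @ z)) v"
  by (induction u arbitrary: f) auto

lemma act_snoc: "act f (w @ [x]) = act f w @ [x \<noteq> (f w = 1)]"
  by (simp add: act_append)

lemma take_act: "take k (act f w) = act f (take k w)"
  by (induction w arbitrary: f k) (auto simp: take_Cons split: nat.splits)

lemma act_prefix: "prefix u v \<Longrightarrow> prefix (act f u) (act f v)"
  by (auto simp: prefix_def act_append)

lemma act_inj: "inj (act f)"
proof (rule injI)
  fix u v assume "act f u = act f v"
  then show "u = v"
  proof (induction u arbitrary: v f)
    case Nil then show ?case by (cases v) auto
  next
    case (Cons x u)
    then obtain a t where v: "v = a # t" by (cases v) auto
    with Cons.prems have "x = a" by (cases x; cases a) auto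
    with Cons.prems v have "act (\<lambda>z. f (x # z)) u = act (\<lambda>z. f (x # z)) t" by simp
    then have "u = t" by (rule Cons.IH)
    with v \<open>x = a\<close> show ?case by simp
  qed
qed

lemma act_surj: "\<exists>w. act f w = y"
proof (induction y arbitrary: f)
  case Nil then show ?case by (intro exI[of _ "[]"]) simp
next
  case (Cons b y)
  define x where "x = (b \<noteq> (f [] = 1))"
  obtain w where "act (\<lambda>v. f (x#v)) w = y" using Cons by blast
  then have "act f (x#w) = b # y" by (auto simp: x_def)
  then show ?case by blast
qed

lemma act_bij: "bij (act f)"
  using act_inj act_surj by (auto simp: bij_def surj_def) metis

lemma act_aut: "act f \<in> aut"
  using act_bij act_prefix by (auto simp: aut_def)

definition lab :: "(bool list \<Rightarrow> bool list) \<Rightarrow> bool list \<Rightarrow> bit" where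
  "lab g w = (if g (w @ [False]) ! length w then 1 else 0)"

lemma lab_act[simp]: "lab (act f) = f"
  proof (rule ext)
  fix w show "lab (act f) w = f w" using bit_cases2[of "f w"] by (auto simp: lab_def act_snoc nth_append)
qed

lemma prefix_length_Suc:
  assumes "prefix a b" "length b = Suc (length a)"
  shows "\<exists>c. b = a @ [c]"
proof -
  obtain r where "b = a @ r" using assms(1) by (auto simp: prefix_def)
  with assms(2) have "length r = 1" by simp
  then obtain c where "r = [c]" by (cases r) auto
  with \<open>b = a @ r\<close> show ?thesis by blast
qed

lemma aut_act_lab:
  assumes "g \<in> aut" shows "g = act (lab g)"
proof
  fix w show "g w = act (lab g) w"
  proof (induction w rule: rev_induct)
    case Nil
    have "length (g []) = 0" using assms by (auto simp: aut_def)
    then show ?case by simp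
  next
    case (snoc x w)
    have len: "\<And>u. length (g u) = length u" and pre: "\<And>u v. prefix u v \<Longrightarrow> prefix (g u) (g v)"
      and ij: "inj g" using assms by (auto simp: aut_def bij_def)
    obtain c where c: "g (w @ [x]) = g w @ [c]"
      using prefix_length_Suc[OF pre[of w "w@[x]"]] len by auto
    obtain c0 where c0: "g (w @ [False]) = g w @ [c0]"
      using prefix_length_Suc[OF pre[of w "w@[False]"]] len by auto
    obtain c1 where c1: "g (w @ [True]) = g w @ [c1]"
      using prefix_length_Suc[OF pre[of w "w@[True]"]] len by auto
    have "c1 \<noteq> c0" using c0 c1 injD[OF ij, of "w@[False]" "w@[True]"] by auto
    have lab: "lab g w = (if c0 then 1 else 0)" by (simp add: lab_def c0 nth_append len)
    have "c = (x \<noteq> (lab g w = 1))"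
      using c c0 c1 \<open>c1 \<noteq> c0\<close> lab by (cases x) auto
    then show ?case using c snoc by (simp add: act_snoc)
  qed
qed


definition trunc :: "nat \<Rightarrow> (bool list \<Rightarrow> bit) \<Rightarrow> bool list \<Rightarrow> bit" where
  "trunc k f = (\<lambda>v. if length v < k then f v else 0)"

definition shift :: "(bool list \<Rightarrow> bit) \<Rightarrow> bool list \<Rightarrow> bool list \<Rightarrow> bit" where
  "shift f w = (\<lambda>v. f (w @ v))"

definition comp :: "(bool list \<Rightarrow> bit) \<Rightarrow> (bool list \<Rightarrow> bit) \<Rightarrow> bool list \<Rightarrow> bit" where
  "comp f g = (\<lambda>x. g x + f (act g x))"

lemma act_cong: "(\<And>v. length v < length w \<Longrightarrow> f v = g v) \<Longrightarrow> act f w = act g w"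
proof (induction w arbitrary: f g)
  case Nil then show ?case by simp
next
  case (Cons x w)
  have "f [] = g []" using Cons.prems[of "[]"] by simp
  moreover have "act (\<lambda>v. f (x#v)) w = act (\<lambda>v. g (x#v)) w"
    by (rule Cons.IH) (use Cons.prems in auto)
  ultimately show ?case by simp
qed

lemma act_comp: "act f \<circ> act g = act (comp f g)"
proof
  fix w show "(act f \<circ> act g) w = act (comp f g) w"
  proof (induction w arbitrary: f g)
    case Nil then show ?case by simp
  next
    case (Cons x w)
    define x' where "x' = (x \<noteq> (g [] = 1))"
    have 1: "act g (x#w) = x' # act (\<lambda>v. g (x#v)) w" by (simp add: x'_def)
    have 2: "(x' \<noteq> (f [] = 1)) = (x \<noteq> (comp f g [] = 1))"
      using bit_cases2[of "f []"] bit_cases2[of "g []"] by (auto simp: comp_def x'_def)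
    have 3: "comp (\<lambda>v. f (x'#v)) (\<lambda>v. g (x#v)) = (\<lambda>v. comp f g (x#v))"
      by (auto simp: comp_def x'_def)
    show ?case using Cons.IH[of "\<lambda>v. f (x'#v)" "\<lambda>v. g (x#v)"] 1 2 3 by simp
  qed
qed

lemma lab_restr_act: "lab (restr k (act f)) = trunc k f"
proof (rule ext)
  fix w show "lab (restr k (act f)) w = trunc k f w"
    using bit_cases2[of "f w"]
    by (auto simp: lab_def restr_def trunc_def act_snoc nth_append)
qed

lemma restr_act_trunc: "restr k (act (trunc k f)) = restr k (act f)"
  by (rule ext) (auto simp: restr_def trunc_def intro!: act_cong)

lemma restr_act_eq_iff: "restr k (act f) = restr k (act g) \<longleftrightarrow> trunc k f = trunc k g"
  by (metis lab_restr_act restr_act_trunc)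

lemma restr_act_fin: "restr k (act f) \<in> aut_fin k"
proof -
  have bij: "bij_betw (restr k (act f)) (words_le k) (words_le k)"
  proof (rule bij_betw_imageI)
    show "inj_on (restr k (act f)) (words_le k)"
      using act_inj by (auto simp: inj_on_def restr_def words_le_def inj_def)
    show "restr k (act f) ` words_le k = words_le k"
    proof
      show "restr k (act f) ` words_le k \<subseteq> words_le k" by (auto simp: restr_def words_le_def)
      show "words_le k \<subseteq> restr k (act f) ` words_le k"
      proof
        fix y assume "y \<in> words_le k"
        obtain w where "act f w = y" using act_surj by blast
        then show "y \<in> restr k (act f) ` words_le k" using \<open>y \<in> words_le k\<close>
          by (auto simp: restr_def words_le_def image_def intro!: bexI[of _ w])
      qed
    qed
  qed
  have pre: "\<And>u v. length v \<le> k \<Longrightarrow> prefix u v \<Longrightarrow> prefix (restr k (act f) u) (restr k (act f) v)"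
  proof -
    fix u v :: "bool list" assume "length v \<le> k" "prefix u v"
    then have "length u \<le> k" using prefix_length_le by fastforce
    then show "prefix (restr k (act f) u) (restr k (act f) v)"
      using \<open>length v \<le> k\<close> \<open>prefix u v\<close> act_prefix by (simp add: restr_def)
  qed
  show ?thesis using bij pre by (auto simp: aut_fin_def restr_def)
qed

lemma fin_act_lab:
  assumes "p \<in> aut_fin k" shows "p = restr k (act (lab p))"
proof
  fix w show "p w = restr k (act (lab p)) w"
  proof (cases "length w \<le> k")
    case False then show ?thesis using assms by (auto simp: aut_fin_def restr_def)
  next
    case True
    have len: "\<And>u. length (p u) = length u"
      and pre: "\<And>u v. length v \<le> k \<Longrightarrow> prefix u v \<Longrightarrow> prefix (p u) (p v)"
      and ij: "inj_on p (words_le k)" using assms by (auto simp: aut_fin_def bij_betw_def)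
    have "length w \<le> k \<Longrightarrow> p w = act (lab p) w"
    proof (induction w rule: rev_induct)
      case Nil
      have "length (p []) = 0" using len by simp
      then show ?case by simp
    next
      case (snoc x w)
      have lw: "length (w @ [x]) \<le> k" "length (w @ [False]) \<le> k" "length (w @ [True]) \<le> k"
        using snoc.prems by auto
      obtain c where c: "p (w @ [x]) = p w @ [c]"
        using prefix_length_Suc[OF pre[of "w@[x]" w]] len lw by auto
      obtain c0 where c0: "p (w @ [False]) = p w @ [c0]"
        using prefix_length_Suc[OF pre[of "w@[False]" w]] len lw by auto
      obtain c1 where c1: "p (w @ [True]) = p w @ [c1]"
        using prefix_length_Suc[OF pre[of "w@[True]" w]] len lw by auto
      have "c1 \<noteq> c0" using c0 c1 inj_onD[OF ij, of "w@[False]" "w@[True]"] lw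
        by (auto simp: words_le_def)
      have lab: "lab p w = (if c0 then 1 else 0)" by (simp add: lab_def c0 nth_append len)
      have "c = (x \<noteq> (lab p w = 1))"
        using c c0 c1 \<open>c1 \<noteq> c0\<close> lab by (cases x) auto
      then show ?case using c snoc by (simp add: act_snoc)
    qed
    then show ?thesis using True by (simp add: restr_def)
  qed
qed

lemma fin_lab_trunc: "p \<in> aut_fin k \<Longrightarrow> trunc k (lab p) = lab p"
  by (metis fin_act_lab lab_restr_act restr_act_trunc)

lemma aut_fin_eq: "aut_fin k = (\<lambda>f. restr k (act f)) ` UNIV"
  using fin_act_lab restr_act_fin by blast

lemma restr_act_comp: "restr k (act f) \<circ> restr k (act g) = restr k (act (comp f g))"
  by (rule ext) (auto simp: restr_def act_comp[symmetric])

lemma sec_act: "sec (act f) w = act (shift f w)"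
  by (rule ext) (simp add: sec_def act_append shift_def)

lemma portrait_act: "portrait (act f) = f"
proof
  fix w show "portrait (act f) w = f w"
    using bit_cases2[of "f w"] by (auto simp: portrait_def alpha_def sec_act shift_def)
qed

lemma restr_restr_act: "j \<le> k \<Longrightarrow> restr j (restr k (act f)) = restr j (act f)"
  by (auto simp: restr_def)

lemma trunc_trunc: "trunc j (trunc k f) = trunc (min j k) f"
  by (auto simp: trunc_def)

lemma length_act_comp: "length (act g x) = length x" by simp

lemma trunc_comp: "trunc k (comp f g) = trunc k (comp (trunc k f) (trunc k g))"
proof
  fix x show "trunc k (comp f g) x = trunc k (comp (trunc k f) (trunc k g)) x"
  proof (cases "length x < k")
    case True
    have "act g x = act (trunc k g) x" by (rule act_cong) (use True in \<open>auto simp: trunc_def\<close>)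
    with True show ?thesis by (auto simp: trunc_def comp_def)
  qed (simp add: trunc_def)
qed



lemma comp_assoc: "comp (comp f g) h = comp f (comp g h)"
proof -
  have "act (comp (comp f g) h) = act (comp f (comp g h))"
    by (simp add: act_comp[symmetric] comp_assoc)
  then show ?thesis by (metis lab_act)
qed

lemma comp_zero_left[simp]: "comp (\<lambda>_. 0) f = f"
  by (simp add: comp_def)

lemma comp_zero_right[simp]: "comp f (\<lambda>_. 0) = f"
proof -
  have "act (\<lambda>_. 0) = id"
  proof
    fix w show "act (\<lambda>_. 0) w = id w" by (induction w) auto
  qed
  then show ?thesis by (simp add: comp_def)
qed

lemma act_zero: "act (\<lambda>_. 0) = id"
proof
  fix w show "act (\<lambda>_. 0) w = id w" by (induction w) auto
qed

definition valid :: "nat \<Rightarrow> (bool list \<Rightarrow> bit) set \<Rightarrow> (bool list \<Rightarrow> bit) set" where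
  "valid d S = {f. \<forall>w. trunc d (shift f w) \<in> S}"

locale epg =
  fixes d :: nat and P :: "(bool list \<Rightarrow> bool list) set"
  assumes ep: "essential_pattern_group d P"
begin

definition S :: "(bool list \<Rightarrow> bit) set" where "S = lab ` P"

lemma d1: "1 \<le> d" using ep by (simp add: essential_pattern_group_def)

lemma P_fin: "P \<subseteq> aut_fin d" using ep by (simp add: essential_pattern_group_def subgroup_of_fin_def)

lemma P_eq: "P = (\<lambda>s. restr d (act s)) ` S"
proof -
  have "\<And>p. p \<in> P \<Longrightarrow> p = restr d (act (lab p))" using P_fin fin_act_lab by blast
  then show ?thesis by (auto simp: S_def image_def)
qed

lemma S_trunc: "s \<in> S \<Longrightarrow> trunc d s = s"
  using P_fin fin_lab_trunc by (auto simp: S_def)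

lemma S_high: "s \<in> S \<Longrightarrow> d \<le> length v \<Longrightarrow> s v = 0"
  by (metis S_trunc not_le trunc_def)

lemma S_mem_iff: "restr d (act f) \<in> P \<longleftrightarrow> trunc d f \<in> S"
proof
  assume "restr d (act f) \<in> P"
  then have "lab (restr d (act f)) \<in> S" by (simp add: S_def)
  then show "trunc d f \<in> S" by (simp add: lab_restr_act)
next
  assume "trunc d f \<in> S"
  then have "restr d (act (trunc d f)) \<in> P" using P_eq by auto
  then show "restr d (act f) \<in> P" by (simp add: restr_act_trunc)
qed

lemma S_zero: "(\<lambda>_. 0) \<in> S"
proof -
  have "id \<in> P" using ep by (simp add: essential_pattern_group_def subgroup_of_fin_def)
  moreover have "id = restr d (act (\<lambda>_. 0))" by (auto simp: act_zero restr_def)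
  ultimately have "restr d (act (\<lambda>_. 0)) \<in> P" by simp
  then have "trunc d (\<lambda>_. 0) \<in> S" using S_mem_iff by blast
  then show ?thesis by (simp add: trunc_def)
qed

lemma S_comp: "s \<in> S \<Longrightarrow> t \<in> S \<Longrightarrow> comp s t \<in> S"
proof -
  assume s: "s \<in> S" and t: "t \<in> S"
  have "restr d (act s) \<in> P" "restr d (act t) \<in> P" using s t P_eq by auto
  then have "restr d (act s) \<circ> restr d (act t) \<in> P"
    using ep by (simp add: essential_pattern_group_def subgroup_of_fin_def)
  then have "trunc d (comp s t) \<in> S" by (simp add: restr_act_comp S_mem_iff)
  moreover have "trunc d (comp s t) = comp s t"
    using S_high[OF s] S_high[OF t] by (auto simp: trunc_def comp_def)
  ultimately show ?thesis by simp
qed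

lemma S_inv: "s \<in> S \<Longrightarrow> \<exists>t\<in>S. comp s t = (\<lambda>_. 0)"
proof -
  assume s: "s \<in> S"
  let ?p = "restr d (act s)"
  have p: "?p \<in> P" using s P_eq by auto
  then have ip: "inv ?p \<in> P" using ep by (simp add: essential_pattern_group_def subgroup_of_fin_def)
  have "?p \<in> aut_fin d" using p P_fin by auto
  have "surj ?p"
  proof -
    have "\<And>y. \<exists>x. ?p x = y"
    proof -
      fix y :: "bool list"
      obtain x where "act s x = y" using act_surj by blast
      then show "\<exists>x. ?p x = y" by (cases "length y \<le> d") (auto simp: restr_def intro: exI[of _ y])
    qed
    then show ?thesis by (metis surj_def)
  qed
  then have "?p \<circ> inv ?p = id" by (simp add: surj_iff)
  moreover obtain t where t: "t \<in> S" "inv ?p = restr d (act t)" using ip P_eq by auto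
  ultimately have "restr d (act (comp s t)) = restr d (act (\<lambda>_. 0))"
  proof -
    assume a1: "?p \<circ> inv ?p = id"
    have "restr d (act (comp s t)) = ?p \<circ> inv ?p" by (simp add: restr_act_comp t(2))
    also have "\<dots> = restr d (act (\<lambda>_. 0))" using a1 by (auto simp: act_zero restr_def)
    finally show ?thesis .
  qed
  then have "trunc d (comp s t) = trunc d (\<lambda>_. 0)" by (simp add: restr_act_eq_iff)
  moreover have "trunc d (comp s t) = comp s t"
    using S_high[OF s] S_high[OF t(1)] by (auto simp: trunc_def comp_def)
  ultimately show ?thesis using t(1) by (auto simp: trunc_def)
qed

lemma S_same_top:
  assumes s: "s \<in> S" and s': "s' \<in> S" and top: "\<And>v. length v < d - 1 \<Longrightarrow> s v = s' v"
  shows "(\<lambda>v. s v + s' v) \<in> S"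
proof -
  obtain t where t: "t \<in> S" "comp s t = (\<lambda>_. 0)" using S_inv[OF s] by blast
  define q where "q = comp t s'"
  have q: "q \<in> S" using S_comp t s' by (simp add: q_def)
  have sq: "comp s q = s'" by (simp add: q_def comp_assoc[symmetric] t)
  have "q = (\<lambda>v. s v + s' v)"
  proof
    fix x show "q x = s x + s' x"
    proof (cases "length x < d")
      case True
      have "act s' x = act s x" by (rule act_cong[symmetric]) (use True top in auto)
      moreover have "act s' x = act s (act q x)" by (metis sq act_comp comp_apply)
      ultimately have "act q x = x" using act_inj by (metis injD)
      then have "s' x = q x + s x" by (metis sq comp_def)
      then show ?thesis by (metis add.commute bit_add_self2)
    next
      case False then show ?thesis using S_high[OF q] S_high[OF s] S_high[OF s'] by simp
    qed
  qed
  then show ?thesis using q by simp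
qed

lemma S_ess: "s \<in> S \<Longrightarrow> \<exists>t\<in>S. \<forall>v. length v < d - 1 \<longrightarrow> t v = s (i # v)"
proof -
  assume s: "s \<in> S"
  let ?p = "restr d (act s)"
  have p: "?p \<in> P" using s P_eq by auto
  then obtain q where q: "q \<in> P" "restr (d - 1) q = restr (d - 1) (sec ?p [i])"
    using ep by (auto simp: essential_pattern_group_def)
  obtain t where t: "t \<in> S" "q = restr d (act t)" using q(1) P_eq by auto
  have "restr (d - 1) (sec ?p [i]) = restr (d - 1) (act (shift s [i]))"
    using d1 by (auto simp: restr_def sec_def act_append shift_def fun_eq_iff)
  moreover have "restr (d - 1) q = restr (d - 1) (act t)" using t by (auto simp: restr_def fun_eq_iff)
  ultimately have "trunc (d - 1) t = trunc (d - 1) (shift s [i])"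
    using q(2) by (simp add: restr_act_eq_iff)
  then have "\<forall>v. length v < d - 1 \<longrightarrow> t v = s (i # v)"
    by (auto simp: trunc_def shift_def fun_eq_iff) metis
  then show ?thesis using t(1) by blast
qed

lemma GP_eq: "GP d P = act ` valid d S"
proof
  show "GP d P \<subseteq> act ` valid d S"
  proof
    fix g assume g: "g \<in> GP d P"
    then have ga: "g \<in> aut" and gw: "\<And>w. restr d (sec g w) \<in> P" by (auto simp: GP_def)
    have geq: "g = act (lab g)" using aut_act_lab[OF ga] .
    have "lab g \<in> valid d S"
    proof -
      have "\<And>w. trunc d (shift (lab g) w) \<in> S"
        using gw geq by (metis S_mem_iff sec_act)
      then show ?thesis by (simp add: valid_def)
    qed
    with geq show "g \<in> act ` valid d S" by blast
  qed
  show "act ` valid d S \<subseteq> GP d P"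
  proof
    fix g assume "g \<in> act ` valid d S"
    then obtain f where f: "f \<in> valid d S" "g = act f" by blast
    have "\<And>w. restr d (sec g w) \<in> P" using f by (simp add: sec_act S_mem_iff valid_def)
    then show "g \<in> GP d P" using f act_aut by (simp add: GP_def)
  qed
qed

lemma portraits_GP: "portrait ` GP d P = valid d S"
  by (simp add: GP_eq image_image portrait_act)

lemma additive_from_S:
  assumes "\<And>s t. s \<in> S \<Longrightarrow> t \<in> S \<Longrightarrow> (\<lambda>v. s v + t v) \<in> S"
  shows "additive_portraits (GP d P)"
proof -
  have z: "(\<lambda>w. 0) \<in> valid d S" using S_zero by (simp add: valid_def trunc_def shift_def)
  have a: "\<And>f g. f \<in> valid d S \<Longrightarrow> g \<in> valid d S \<Longrightarrow> (\<lambda>w. f w + g w) \<in> valid d S"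
  proof -
    fix f g assume "f \<in> valid d S" "g \<in> valid d S"
    then have "\<And>w. (\<lambda>v. trunc d (shift f w) v + trunc d (shift g w) v) \<in> S"
      using assms by (auto simp: valid_def)
    moreover have "\<And>w. (\<lambda>v. trunc d (shift f w) v + trunc d (shift g w) v) = trunc d (shift (\<lambda>w. f w + g w) w)"
      by (auto simp: trunc_def shift_def)
    ultimately show "(\<lambda>w. f w + g w) \<in> valid d S" by (simp add: valid_def)
  qed
  show ?thesis unfolding additive_portraits_def portraits_GP using z a by simp
qed

end


lemma card_supp:
  assumes "finite D"
  shows "card {f :: 'a \<Rightarrow> bit. \<forall>x. x \<notin> D \<longrightarrow> f x = 0} = 2 ^ card D"
    and "finite {f :: 'a \<Rightarrow> bit. \<forall>x. x \<notin> D \<longrightarrow> f x = 0}"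
proof -
  let ?F = "{f :: 'a \<Rightarrow> bit. \<forall>x. x \<notin> D \<longrightarrow> f x = 0}"
  have b: "bij_betw (\<lambda>f. {x. f x = 1}) ?F (Pow D)"
  proof (rule bij_betw_imageI)
    show "inj_on (\<lambda>f. {x. f x = 1}) ?F"
    proof (rule inj_onI)
      fix f g assume "f \<in> ?F" "g \<in> ?F" "{x. f x = 1} = {x. g x = 1}"
      then have "\<And>x. (f x = 1) = (g x = 1)" by (simp add: set_eq_iff)
      then show "f = g" by (metis bit_cases2 ext)
    qed
    show "(\<lambda>f. {x. f x = 1}) ` ?F = Pow D"
    proof
      show "(\<lambda>f. {x. f x = 1}) ` ?F \<subseteq> Pow D" by auto
      show "Pow D \<subseteq> (\<lambda>f. {x. f x = 1}) ` ?F"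
      proof
        fix A assume "A \<in> Pow D"
        then have "(\<lambda>x. if x \<in> A then 1 else 0) \<in> ?F" "{x. (if x \<in> A then 1 else 0) = (1::bit)} = A"
          by auto
        then show "A \<in> (\<lambda>f. {x. f x = 1}) ` ?F" by (intro image_eqI[of A _ "\<lambda>x. if x \<in> A then 1 else 0"]) simp_all
      qed
    qed
  qed
  show "card ?F = 2 ^ card D" using bij_betw_same_card[OF b] assms by (simp add: card_Pow)
  show "finite ?F" using bij_betw_finite[OF b] assms by simp
qed

lemma card_level: "card {v :: bool list. length v = j} = 2 ^ j"
  using card_lists_length_eq[of "UNIV :: bool set" j] by simp

lemma finite_level: "finite {v :: bool list. length v = j}"
  using finite_lists_length_eq[of "UNIV :: bool set" j] by simp

lemma finite_lt: "finite {v :: bool list. length v < j}"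
proof -
  have "{v :: bool list. length v < j} \<subseteq> {xs. set xs \<subseteq> UNIV \<and> length xs \<le> j}" by auto
  then show ?thesis using finite_lists_length_le[of "UNIV :: bool set" j] finite_subset by auto
qed

lemma card_lt: "card {v :: bool list. length v < j} = 2 ^ j - 1"
proof (induction j)
  case 0 then show ?case by simp
next
  case (Suc j)
  have "{v :: bool list. length v < Suc j} = {v. length v < j} \<union> {v. length v = j}" by auto
  then have "card {v :: bool list. length v < Suc j} = card {v :: bool list. length v < j} + card {v :: bool list. length v = j}"
    using finite_lt finite_level by (simp add: card_Un_disjoint disjoint_iff)
  also have "\<dots> = 2 ^ j - 1 + 2 ^ j" using Suc card_level by simp
  also have "\<dots> = 2 ^ Suc j - 1" using one_le_power[of "2::nat" j] by simp
  finally show ?case .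
qed

definition supp_on :: "bool list set \<Rightarrow> (bool list \<Rightarrow> bit) set" where
  "supp_on D = {f. \<forall>x. x \<notin> D \<longrightarrow> f x = 0}"

lemma card_supp_level: "card (supp_on {v. length v = j}) = 2 ^ 2 ^ j"
  using card_supp(1)[OF finite_level] by (simp add: supp_on_def card_level)

lemma finite_supp_lt: "finite (supp_on {v. length v < j})"
  using card_supp(2)[OF finite_lt] by (simp add: supp_on_def)

lemma finite_supp_level: "finite (supp_on {v. length v = j})"
  using card_supp(2)[OF finite_level] by (simp add: supp_on_def)

lemma card_aut_fin: "card (aut_fin n) = 2 ^ (2 ^ n - 1)"
proof -
  have "aut_fin n = (\<lambda>f. restr n (act f)) ` supp_on {v. length v < n}"
  proof
    show "aut_fin n \<subseteq> (\<lambda>f. restr n (act f)) ` supp_on {v. length v < n}"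
    proof
      fix p assume p: "p \<in> aut_fin n"
      then have "p = restr n (act (lab p))" "trunc n (lab p) = lab p"
        using fin_act_lab fin_lab_trunc by auto
      moreover have "lab p \<in> supp_on {v. length v < n}"
      proof -
        have "\<And>x. \<not> length x < n \<Longrightarrow> lab p x = 0"
          using \<open>trunc n (lab p) = lab p\<close> by (metis trunc_def)
        then show ?thesis by (auto simp: supp_on_def)
      qed
      ultimately show "p \<in> (\<lambda>f. restr n (act f)) ` supp_on {v. length v < n}" by blast
    qed
    show "(\<lambda>f. restr n (act f)) ` supp_on {v. length v < n} \<subseteq> aut_fin n"
      using restr_act_fin by auto
  qed
  moreover have "inj_on (\<lambda>f. restr n (act f)) (supp_on {v. length v < n})"
  proof (rule inj_onI)
    fix f g assume "f \<in> supp_on {v. length v < n}" "g \<in> supp_on {v. length v < n}"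
      "restr n (act f) = restr n (act g)"
    moreover have "trunc n f = f" "trunc n g = g" using \<open>f \<in> _\<close> \<open>g \<in> _\<close>
      by (auto simp: supp_on_def trunc_def fun_eq_iff)
    ultimately show "f = g" by (metis restr_act_eq_iff)
  qed
  ultimately have "card (aut_fin n) = card (supp_on {v. length v < n})" by (simp add: card_image)
  also have "\<dots> = 2 ^ (2 ^ n - 1)" using card_supp(1)[OF finite_lt, of n] card_lt[of n]
    by (simp add: supp_on_def)
  finally show ?thesis .
qed


lemma comp_inv_sym:
  assumes "comp s t = (\<lambda>_. 0)" shows "comp t s = (\<lambda>_. 0)"
proof -
  have "act s \<circ> act t = id" using assms by (simp add: act_comp act_zero)
  have "act t \<circ> act s = id"
  proof
    fix x
    have "act s (act t (act s x)) = act s x" using \<open>act s \<circ> act t = id\<close> by (metis comp_apply id_apply)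
    then show "(act t \<circ> act s) x = id x" using act_inj by (simp add: inj_def)
  qed
  then have "act (comp t s) = act (\<lambda>_. 0)" by (simp add: act_comp act_zero)
  then show ?thesis by (metis lab_act)
qed

lemma halves_eq:
  assumes d2: "2 \<le> d"
    and f: "\<And>v. length v \<noteq> d - 1 \<Longrightarrow> f v = 0" and g: "\<And>v. length v \<noteq> d - 1 \<Longrightarrow> g v = 0"
    and h: "\<And>i. trunc (d - 1) (shift f [i]) = trunc (d - 1) (shift g [i])"
  shows "f = g"
proof
  fix v show "f v = g v"
  proof (cases v)
    case Nil then show ?thesis using f g d2 by simp
  next
    case (Cons i v')
    show ?thesis
    proof (cases "length v' < d - 1")
      case True
      have "trunc (d - 1) (shift f [i]) v' = trunc (d - 1) (shift g [i]) v'" using h by simp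
      then show ?thesis using True Cons by (simp add: trunc_def shift_def)
    next
      case False then show ?thesis using f g Cons d2 by simp
    qed
  qed
qed

context epg begin

definition L0 :: "(bool list \<Rightarrow> bit) set" where
  "L0 = {s \<in> S. \<forall>v. length v < d - 1 \<longrightarrow> s v = 0}"

lemma S_supp: "S \<subseteq> supp_on {v. length v < d}"
  using S_high by (auto simp: supp_on_def)

lemma finite_S: "finite S"
  using S_supp finite_supp_lt finite_subset by blast

lemma finite_L0: "finite L0"
  using finite_S by (simp add: L0_def)

lemma act_low_zero:
  assumes "\<And>v. length v < length x \<Longrightarrow> l v = 0" shows "act l x = x"
proof -
  have "act l x = act (\<lambda>_. 0) x" by (rule act_cong) (use assms in auto)
  then show ?thesis by (simp add: act_zero)
qed

lemma S_add_L0: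
  assumes s: "s \<in> S" and l: "l \<in> L0" shows "(\<lambda>v. s v + l v) \<in> S"
proof -
  have lS: "l \<in> S" and l0: "\<And>v. length v < d - 1 \<Longrightarrow> l v = 0" using l by (auto simp: L0_def)
  have "comp s l = (\<lambda>v. s v + l v)"
  proof
    fix x show "comp s l x = s x + l x"
    proof (cases "length x < d")
      case True
      have "act l x = x" by (rule act_low_zero) (use True l0 in auto)
      then show ?thesis by (simp add: comp_def add.commute)
    next
      case False
      then show ?thesis using S_high[OF s] S_high[OF lS] by (simp add: comp_def)
    qed
  qed
  then show ?thesis using S_comp[OF s lS] by simp
qed

definition P' :: "(bool list \<Rightarrow> bool list) set" where "P' = restr (d - 1) ` P"

lemma P'_eq: "P' = (\<lambda>s. restr (d - 1) (act s)) ` S"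
proof -
  have "P' = (\<lambda>s. restr (d - 1) (restr d (act s))) ` S" unfolding P'_def
    by (subst P_eq) (rule image_image)
  also have "\<dots> = (\<lambda>s. restr (d - 1) (act s)) ` S"
    using restr_restr_act[of "d - 1" d] by simp
  finally show ?thesis .
qed

lemma P'_ep: assumes d2: "2 \<le> d" shows "essential_pattern_group (d - 1) P'"
proof -
  have sub: "P' \<subseteq> aut_fin (d - 1)" unfolding P'_eq using restr_act_fin by blast
  have idP: "id \<in> P'"
  proof -
    have "id = restr (d - 1) (act (\<lambda>_. 0))" by (auto simp: act_zero restr_def)
    then show ?thesis unfolding P'_eq using S_zero by blast
  qed
  have cmp: "\<forall>p\<in>P'. \<forall>q\<in>P'. p \<circ> q \<in> P'"
  proof (intro ballI)
    fix p q assume pq: "p \<in> P'" "q \<in> P'"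
    obtain s where s: "s \<in> S" "p = restr (d - 1) (act s)" using pq(1) unfolding P'_eq by (rule imageE)
    obtain t where t: "t \<in> S" "q = restr (d - 1) (act t)" using pq(2) unfolding P'_eq by (rule imageE)
    have "p \<circ> q = restr (d - 1) (act (comp s t))" using s(2) t(2) by (simp add: restr_act_comp)
    moreover have "comp s t \<in> S" using S_comp s(1) t(1) by blast
    ultimately show "p \<circ> q \<in> P'" unfolding P'_eq by (rule image_eqI)
  qed
  have iv: "\<forall>p\<in>P'. inv p \<in> P'"
  proof
    fix p assume "p \<in> P'"
    then obtain s where s: "s \<in> S" "p = restr (d - 1) (act s)" unfolding P'_eq by blast
    obtain t where t: "t \<in> S" "comp s t = (\<lambda>_. 0)" using S_inv[OF s(1)] by blast
    have i0: "restr (d - 1) (act (\<lambda>_. 0)) = id" by (auto simp: act_zero restr_def)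
    have "p \<circ> restr (d - 1) (act t) = id" using s(2) t(2) i0 by (simp add: restr_act_comp)
    moreover have "restr (d - 1) (act t) \<circ> p = id"
      using s(2) comp_inv_sym[OF t(2)] i0 by (simp add: restr_act_comp)
    ultimately have "inv p = restr (d - 1) (act t)" by (rule inv_unique_comp)
    then show "inv p \<in> P'" using t(1) unfolding P'_eq by blast
  qed
  have ess: "\<forall>p\<in>P'. \<forall>i::bool. \<exists>q\<in>P'. restr (d - 1 - 1) q = restr (d - 1 - 1) (sec p [i])"
  proof (intro ballI allI)
    fix p i assume "p \<in> P'"
    then obtain s where s: "s \<in> S" "p = restr (d - 1) (act s)" unfolding P'_eq by blast
    obtain t where t: "t \<in> S" "\<forall>v. length v < d - 1 \<longrightarrow> t v = s (i # v)" using S_ess[OF s(1)] by blast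
    have "restr (d - 1 - 1) (sec p [i]) = restr (d - 1 - 1) (act (shift s [i]))"
    proof
      fix v
      show "restr (d - 1 - 1) (sec p [i]) v = restr (d - 1 - 1) (act (shift s [i])) v"
      proof (cases "length v \<le> d - 1 - 1")
        case True
        then have "length (i # v) \<le> d - 1" using d2 by simp
        then have "p (i # v) = act s ([i] @ v)" using s(2) by (simp add: restr_def)
        then have "sec p [i] v = act (shift s [i]) v" by (simp add: sec_def act_append shift_def)
        then show ?thesis using True by (simp add: restr_def)
      qed (simp add: restr_def)
    qed
    moreover have "restr (d - 1 - 1) (restr (d - 1) (act t)) = restr (d - 1 - 1) (act t)"
      by (rule restr_restr_act) simp
    moreover have "trunc (d - 1 - 1) t = trunc (d - 1 - 1) (shift s [i])"
      using t(2) by (auto simp: trunc_def shift_def)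
    ultimately have "restr (d - 1 - 1) (restr (d - 1) (act t)) = restr (d - 1 - 1) (sec p [i])"
      by (simp add: restr_act_eq_iff)
    then show "\<exists>q\<in>P'. restr (d - 1 - 1) q = restr (d - 1 - 1) (sec p [i])"
      using t(1) unfolding P'_eq by blast
  qed
  show ?thesis using d2 sub idP cmp iv ess
    by (simp add: essential_pattern_group_def subgroup_of_fin_def)
qed

lemma lab_P': "lab ` P' = trunc (d - 1) ` S"
  by (simp add: P'_eq image_image lab_restr_act)

end


context epg begin

lemma shift_trunc_S':
  assumes "s \<in> S" shows "trunc (d - 1) (shift s [i]) \<in> trunc (d - 1) ` S"
proof -
  obtain t where t: "t \<in> S" "\<forall>v. length v < d - 1 \<longrightarrow> t v = s (i # v)" using S_ess[OF assms] by blast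
  have "trunc (d - 1) t = trunc (d - 1) (shift s [i])" using t(2) by (auto simp: trunc_def shift_def)
  then show ?thesis using t(1) by (metis image_eqI)
qed

lemma min_full:
  assumes d2: "2 \<le> d"
    and cardL0: "card L0 = 2 ^ (2 ^ (d - 1) - 2)"
    and mini: "GP d P \<noteq> GP (d - 1) P'"
    and k0: "k0 \<in> supp_on {v. length v = d - 2}"
  shows "k0 \<in> trunc (d - 1) ` S"
proof (rule ccontr)
  assume nk: "k0 \<notin> trunc (d - 1) ` S"
  interpret E': epg "d - 1" P' by (rule epg.intro) (rule P'_ep[OF d2])
  define S' where "S' = trunc (d - 1) ` S"
  have S'eq: "E'.S = S'" by (simp add: E'.S_def lab_P' S'_def)
  have dd: "d - 1 - 1 = d - 2" by simp
  define K where "K = {k \<in> S'. \<forall>v. length v < d - 2 \<longrightarrow> k v = 0}"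
  define F where "F = supp_on {v :: bool list. length v = d - 2}"
  have finF: "finite F" by (simp add: F_def finite_supp_level)
  have cardF: "card F = 2 ^ 2 ^ (d - 2)" by (simp add: F_def card_supp_level)
  have S'_high: "\<And>k v. k \<in> S' \<Longrightarrow> d - 1 \<le> length v \<Longrightarrow> k v = 0"
    by (auto simp: S'_def trunc_def)
  have K_sub: "K \<subseteq> F"
  proof
    fix k assume "k \<in> K"
    then have "k \<in> S'" "\<And>v. length v < d - 2 \<Longrightarrow> k v = 0" by (auto simp: K_def)
    then have "\<And>v. length v \<noteq> d - 2 \<Longrightarrow> k v = 0"
    proof -
      fix v :: "bool list" assume "length v \<noteq> d - 2"
      show "k v = 0"
      proof (cases "length v < d - 2")
        case True then show ?thesis using \<open>\<And>v. length v < d - 2 \<Longrightarrow> k v = 0\<close> by blast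
      next
        case False
        then have "d - 1 \<le> length v" using \<open>length v \<noteq> d - 2\<close> d2 by linarith
        then show ?thesis using S'_high \<open>k \<in> S'\<close> by blast
      qed
    qed
    then show "k \<in> F" by (auto simp: F_def supp_on_def)
  qed
  have finK: "finite K" using K_sub finF finite_subset by blast
  have K_add: "\<And>k1 k2. k1 \<in> K \<Longrightarrow> k2 \<in> K \<Longrightarrow> (\<lambda>v. k1 v + k2 v) \<in> K"
  proof -
    fix k1 k2 assume "k1 \<in> K" "k2 \<in> K"
    then have "k1 \<in> E'.S" "k2 \<in> E'.S" and z: "\<And>v. length v < d - 2 \<Longrightarrow> k1 v = 0 \<and> k2 v = 0"
      by (auto simp: K_def S'eq)
    then have "(\<lambda>v. k1 v + k2 v) \<in> E'.S" by (intro E'.S_same_top) (auto simp: dd)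
    then show "(\<lambda>v. k1 v + k2 v) \<in> K" using z by (auto simp: K_def S'eq)
  qed
  define T where "T = (\<lambda>k v. k v + k0 v) ` K"
  have T_sub: "T \<subseteq> F"
  proof
    fix x assume "x \<in> T"
    then obtain k where "k \<in> K" "x = (\<lambda>v. k v + k0 v)" by (auto simp: T_def)
    then show "x \<in> F" using K_sub k0 by (auto simp: F_def supp_on_def)
  qed
  have TK: "T \<inter> K = {}"
  proof (rule ccontr)
    assume "T \<inter> K \<noteq> {}"
    then obtain k where k: "k \<in> K" "(\<lambda>v. k v + k0 v) \<in> K" by (auto simp: T_def)
    then have "(\<lambda>v. k v + (k v + k0 v)) \<in> K" using K_add by blast
    then have "k0 \<in> K" by simp
    then show False using nk by (auto simp: K_def S'_def)
  qed
  have cardT: "card T = card K"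
    unfolding T_def by (rule card_image) (auto simp: inj_on_def fun_eq_iff)
  have finT: "finite T" using T_sub finF finite_subset by blast
  have "card (T \<union> K) = card T + card K" using card_Un_disjoint[OF finT finK TK] .
  moreover have "card (T \<union> K) \<le> card F" using card_mono[OF finF] T_sub K_sub by simp
  ultimately have "card T + card K \<le> card F" by simp
  then have cK2: "2 * card K \<le> 2 ^ 2 ^ (d - 2)" using cardT cardF by simp
  have e1: "(2::nat) ^ (d - 2) = Suc (2 ^ (d - 2) - 1)" by simp
  have pp: "(2::nat) ^ 2 ^ (d - 2) = 2 * 2 ^ (2 ^ (d - 2) - 1)"
    by (subst e1) (simp only: power_Suc)
  have cK: "card K \<le> 2 ^ (2 ^ (d - 2) - 1)" using cK2 pp by simp
  define h where "h = (\<lambda>l. (trunc (d - 1) (shift l [False]), trunc (d - 1) (shift l [True])))"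
  have L0_supp: "\<And>l v. l \<in> L0 \<Longrightarrow> length v \<noteq> d - 1 \<Longrightarrow> l v = 0"
  proof -
    fix l and v :: "bool list" assume "l \<in> L0" "length v \<noteq> d - 1"
    then show "l v = 0" using S_high[of l v] by (cases "length v < d - 1") (auto simp: L0_def)
  qed
  have hK: "\<And>l i. l \<in> L0 \<Longrightarrow> trunc (d - 1) (shift l [i]) \<in> K"
  proof -
    fix l i assume l: "l \<in> L0"
    then have "trunc (d - 1) (shift l [i]) \<in> S'" using shift_trunc_S' by (auto simp: L0_def S'_def)
    moreover have "\<And>v. length v < d - 2 \<Longrightarrow> trunc (d - 1) (shift l [i]) v = 0"
      using l by (auto simp: L0_def trunc_def shift_def)
    ultimately show "trunc (d - 1) (shift l [i]) \<in> K" by (auto simp: K_def)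
  qed
  have h_into: "h ` L0 \<subseteq> K \<times> K" using hK by (auto simp: h_def)
  have h_inj: "inj_on h L0"
  proof (rule inj_onI)
    fix l1 l2 assume l: "l1 \<in> L0" "l2 \<in> L0" "h l1 = h l2"
    have "\<And>i. trunc (d - 1) (shift l1 [i]) = trunc (d - 1) (shift l2 [i])"
    proof -
      fix i show "trunc (d - 1) (shift l1 [i]) = trunc (d - 1) (shift l2 [i])"
        using l(3) by (cases i) (auto simp: h_def)
    qed
    then show "l1 = l2" using halves_eq[OF d2] L0_supp l(1,2) by blast
  qed
  have finKK: "finite (K \<times> K)" using finK by simp
  have "card (K \<times> K) = card K * card K" by (simp add: card_cartesian_product)
  also have "\<dots> \<le> 2 ^ (2 ^ (d - 2) - 1) * 2 ^ (2 ^ (d - 2) - 1)" using cK by (simp add: mult_le_mono)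
  also have "\<dots> = 2 ^ (2 ^ (d - 1) - 2)"
  proof -
    have e2: "d - 1 = Suc (d - 2)" using d2 by simp
    have "2 ^ (d - 1) = 2 * (2::nat) ^ (d - 2)" by (subst e2) (simp only: power_Suc)
    moreover have "1 \<le> (2::nat) ^ (d - 2)" by simp
    ultimately have ex: "2 ^ (d - 1) - 2 = (2 ^ (d - 2) - 1) + (2 ^ (d - 2) - (1::nat))" by linarith
    have "(2::nat) ^ (2 ^ (d - 2) - 1) * 2 ^ (2 ^ (d - 2) - 1) = 2 ^ ((2 ^ (d - 2) - 1) + (2 ^ (d - 2) - 1))"
      by (simp only: power_add)
    then show ?thesis by (simp only: ex)
  qed
  finally have "card (K \<times> K) \<le> card L0" using cardL0 by simp
  moreover have "card (h ` L0) = card L0" using card_image[OF h_inj] .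
  ultimately have "card (K \<times> K) \<le> card (h ` L0)" by simp
  moreover have "card (h ` L0) \<le> card (K \<times> K)" using card_mono[OF finKK h_into] .
  ultimately have "card (h ` L0) = card (K \<times> K)" by (rule antisym[rotated])
  then have hsurj: "h ` L0 = K \<times> K" using card_subset_eq[OF finKK h_into] by blast
  have Q: "\<And>t. (\<And>v. d \<le> length v \<Longrightarrow> t v = 0) \<Longrightarrow> trunc (d - 1) t \<in> S'
             \<Longrightarrow> (\<And>i. trunc (d - 1) (shift t [i]) \<in> S') \<Longrightarrow> t \<in> S"
  proof -
    fix t assume th: "\<And>v. d \<le> length v \<Longrightarrow> t v = 0" and t1: "trunc (d - 1) t \<in> S'"
      and t2: "\<And>i. trunc (d - 1) (shift t [i]) \<in> S'"
    obtain s where s: "s \<in> S" "trunc (d - 1) s = trunc (d - 1) t" using t1 by (auto simp: S'_def)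
    have st: "\<And>v. length v < d - 1 \<Longrightarrow> s v = t v"
    proof -
      fix v :: "bool list" assume "length v < d - 1"
      moreover have "trunc (d - 1) s v = trunc (d - 1) t v" using s(2) by simp
      ultimately show "s v = t v" by (simp add: trunc_def)
    qed
    define y where "y = (\<lambda>v. t v + s v)"
    have ysupp: "\<And>v. length v \<noteq> d - 1 \<Longrightarrow> y v = 0"
    proof -
      fix v :: "bool list" assume "length v \<noteq> d - 1"
      then show "y v = 0" using st[of v] th[of v] S_high[OF s(1), of v]
        by (cases "length v < d - 1") (auto simp: y_def)
    qed
    have yK: "\<And>i. trunc (d - 1) (shift y [i]) \<in> K"
    proof -
      fix i
      have a: "trunc (d - 1) (shift t [i]) \<in> E'.S" using t2 S'eq by simp
      have b: "trunc (d - 1) (shift s [i]) \<in> E'.S" using shift_trunc_S'[OF s(1)] S'eq S'_def by simp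
      have "(\<lambda>v. trunc (d - 1) (shift t [i]) v + trunc (d - 1) (shift s [i]) v) \<in> E'.S"
        using a b by (rule E'.S_same_top) (use st in \<open>auto simp: trunc_def shift_def dd\<close>)
      moreover have "(\<lambda>v. trunc (d - 1) (shift t [i]) v + trunc (d - 1) (shift s [i]) v) = trunc (d - 1) (shift y [i])"
        by (auto simp: trunc_def shift_def y_def)
      ultimately have "trunc (d - 1) (shift y [i]) \<in> S'" using S'eq by simp
      moreover have "\<And>v. length v < d - 2 \<Longrightarrow> trunc (d - 1) (shift y [i]) v = 0"
        using ysupp by (auto simp: trunc_def shift_def)
      ultimately show "trunc (d - 1) (shift y [i]) \<in> K" by (auto simp: K_def)
    qed
    then have "h y \<in> K \<times> K" by (simp add: h_def)
    then have "h y \<in> h ` L0" using hsurj by simp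
    then obtain l where l0: "h y = h l" "l \<in> L0" by (rule imageE)
    then have l: "l \<in> L0" "h l = h y" by simp_all
    have "\<And>i. trunc (d - 1) (shift l [i]) = trunc (d - 1) (shift y [i])"
    proof -
      fix i show "trunc (d - 1) (shift l [i]) = trunc (d - 1) (shift y [i])"
        using l(2) by (cases i) (auto simp: h_def)
    qed
    then have "l = y" using halves_eq[OF d2] L0_supp[OF l(1)] ysupp by blast
    then have "(\<lambda>v. s v + y v) \<in> S" using S_add_L0[OF s(1)] l(1) by simp
    moreover have "(\<lambda>v. s v + y v) = t" by (auto simp: y_def fun_eq_iff add.commute)
    ultimately show "t \<in> S" by simp
  qed
  have "valid d S = valid (d - 1) S'"
  proof
    show "valid d S \<subseteq> valid (d - 1) S'"
    proof
      fix f assume "f \<in> valid d S"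
      then have "\<And>w. trunc (d - 1) (trunc d (shift f w)) \<in> S'" by (auto simp: valid_def S'_def)
      moreover have "\<And>w. trunc (d - 1) (trunc d (shift f w)) = trunc (d - 1) (shift f w)"
        by (simp add: trunc_trunc)
      ultimately show "f \<in> valid (d - 1) S'" by (simp add: valid_def)
    qed
    show "valid (d - 1) S' \<subseteq> valid d S"
    proof
      fix f assume f: "f \<in> valid (d - 1) S'"
      have "\<And>w. trunc d (shift f w) \<in> S"
      proof -
        fix w
        show "trunc d (shift f w) \<in> S"
        proof (rule Q)
          show "\<And>v. d \<le> length v \<Longrightarrow> trunc d (shift f w) v = 0" by (simp add: trunc_def)
          have "trunc (d - 1) (trunc d (shift f w)) = trunc (d - 1) (shift f w)" by (simp add: trunc_trunc)
          then show "trunc (d - 1) (trunc d (shift f w)) \<in> S'" using f by (simp add: valid_def)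
          fix i
          have "trunc (d - 1) (shift (trunc d (shift f w)) [i]) = trunc (d - 1) (shift f (w @ [i]))"
            by (rule ext) (auto simp: trunc_def shift_def)
          then show "trunc (d - 1) (shift (trunc d (shift f w)) [i]) \<in> S'" using f by (simp add: valid_def)
        qed
      qed
      then show "f \<in> valid d S" by (simp add: valid_def)
    qed
  qed
  then have "GP d P = GP (d - 1) P'" using GP_eq E'.GP_eq S'eq by simp
  then show False using mini by simp
qed

end

context epg begin

lemma chain_step:
  assumes j1: "1 \<le> j" and jd: "j + 1 \<le> d - 1"
    and Fj1: "\<forall>k \<in> supp_on {v. length v = j}. \<exists>s\<in>S. trunc (j + 1) s = k"
  shows "\<forall>k \<in> supp_on {v. length v = j - 1}. \<exists>s\<in>S. trunc j s = k"
proof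
  fix k assume k: "k \<in> supp_on {v. length v = j - 1}"
  define k' where "k' = (\<lambda>v::bool list. case v of [] \<Rightarrow> 0 | x # v' \<Rightarrow> if x then 0 else k v')"
  have "k' \<in> supp_on {v. length v = j}"
  proof -
    have "\<And>v. length v \<noteq> j \<Longrightarrow> k' v = 0"
    proof -
      fix v :: "bool list" assume "length v \<noteq> j"
      then show "k' v = 0" using k j1 by (cases v) (auto simp: k'_def supp_on_def)
    qed
    then show ?thesis by (auto simp: supp_on_def)
  qed
  then obtain s where s: "s \<in> S" "trunc (j + 1) s = k'" using Fj1 by blast
  obtain t where t: "t \<in> S" "\<forall>v. length v < d - 1 \<longrightarrow> t v = s (False # v)" using S_ess[OF s(1)] by blast
  have "trunc j t = k"
  proof
    fix v :: "bool list" show "trunc j t v = k v"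
    proof (cases "length v < j")
      case True
      then have "t v = s (False # v)" using t(2) jd by simp
      also have "\<dots> = trunc (j + 1) s (False # v)" using True by (simp add: trunc_def)
      also have "\<dots> = k v" using s(2) by (simp add: k'_def)
      finally show ?thesis using True by (simp add: trunc_def)
    next
      case False then show ?thesis using k j1 by (auto simp: trunc_def supp_on_def)
    qed
  qed
  then show "\<exists>s\<in>S. trunc j s = k" using t(1) by blast
qed

lemma chain_all:
  assumes d2: "2 \<le> d"
    and K_full: "\<forall>k \<in> supp_on {v. length v = d - 2}. \<exists>s\<in>S. trunc (d - 1) s = k"
  shows "m \<le> d - 2 \<Longrightarrow> \<forall>k \<in> supp_on {v. length v = d - 1 - m - 1}. \<exists>s\<in>S. trunc (d - 1 - m) s = k"
proof (induction m)
  case 0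
  have "d - 1 - 0 - 1 = d - 2" by simp
  then show ?case using K_full by simp
next
  case (Suc m)
  have "1 \<le> d - 1 - Suc m" using Suc.prems by simp
  moreover have "d - 1 - Suc m + 1 \<le> d - 1" using Suc.prems by simp
  moreover have "\<forall>k \<in> supp_on {v. length v = d - 1 - Suc m}. \<exists>s\<in>S. trunc (d - 1 - Suc m + 1) s = k"
  proof -
    have e: "d - 1 - Suc m + 1 = d - 1 - m" "d - 1 - Suc m = d - 1 - m - 1" using Suc.prems by simp_all
    have IH: "\<forall>k\<in>supp_on {v. length v = d - 1 - m - 1}. \<exists>s\<in>S. trunc (d - 1 - m) s = k"
      using Suc.IH Suc.prems by simp
    show ?thesis unfolding e(1) unfolding e(2) by (rule IH)
  qed
  ultimately show ?case by (rule chain_step)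
qed

lemma chain_F:
  assumes d2: "2 \<le> d"
    and K_full: "\<forall>k \<in> supp_on {v. length v = d - 2}. \<exists>s\<in>S. trunc (d - 1) s = k"
    and j: "1 \<le> j" "j \<le> d - 1"
  shows "\<forall>k \<in> supp_on {v. length v = j - 1}. \<exists>s\<in>S. trunc j s = k"
proof -
  have "d - 1 - j \<le> d - 2" using j by simp
  from chain_all[OF d2 K_full this] show ?thesis using j
    by (simp add: Suc_diff_Suc diff_diff_cancel)
qed

lemma top_full_aux:
  assumes d2: "2 \<le> d"
    and K_full: "\<forall>k \<in> supp_on {v. length v = d - 2}. \<exists>s\<in>S. trunc (d - 1) s = k"
  shows "j \<le> d - 1 \<Longrightarrow> \<forall>\<sigma> \<in> supp_on {v. length v < j}. \<exists>s\<in>S. trunc j s = \<sigma>"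
proof (induction j)
  case 0
  show ?case
  proof
    fix \<sigma> assume "\<sigma> \<in> supp_on {v. length v < (0::nat)}"
    then have "\<sigma> = (\<lambda>_. 0)" by (auto simp: supp_on_def)
    moreover have "trunc 0 (\<lambda>_. 0) = (\<lambda>_. 0)" by (simp add: trunc_def)
    ultimately show "\<exists>s\<in>S. trunc 0 s = \<sigma>" using S_zero by blast
  qed
next
  case (Suc j)
  show ?case
  proof
    fix \<sigma> assume sg: "\<sigma> \<in> supp_on {v. length v < Suc j}"
    have "trunc j \<sigma> \<in> supp_on {v. length v < j}" by (auto simp: supp_on_def trunc_def)
    then obtain s where s: "s \<in> S" "trunc j s = trunc j \<sigma>" using Suc by auto
    define k where "k = (\<lambda>v. if length v = j then \<sigma> v + s v else 0)"
    have "k \<in> supp_on {v. length v = Suc j - 1}" by (auto simp: supp_on_def k_def)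
    moreover have "\<forall>k \<in> supp_on {v. length v = Suc j - 1}. \<exists>s\<in>S. trunc (Suc j) s = k"
      by (rule chain_F[OF d2 K_full]) (use Suc.prems in auto)
    ultimately obtain e where e: "e \<in> S" "trunc (Suc j) e = k" by blast
    have "trunc (Suc j) (comp s e) = \<sigma>"
    proof
      fix x :: "bool list"
      show "trunc (Suc j) (comp s e) x = \<sigma> x"
      proof (cases "length x < Suc j")
        case True
        have ez: "\<And>v. length v < j \<Longrightarrow> e v = 0"
        proof -
          fix v :: "bool list" assume "length v < j"
          then have "trunc (Suc j) e v = k v" using e(2) by simp
          then show "e v = 0" using \<open>length v < j\<close> by (simp add: trunc_def k_def)
        qed
        have "act e x = x" by (rule act_low_zero) (use True ez in auto)
        then have r: "comp s e x = e x + s x" by (simp add: comp_def)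
        show ?thesis
        proof (cases "length x = j")
          case True
          have "e x = k x" using e(2) True by (metis lessI trunc_def)
          then show ?thesis using r True by (simp add: trunc_def k_def)
        next
          case False
          then have "length x < j" using True by simp
          moreover have "trunc j s x = trunc j \<sigma> x" using s(2) by simp
          ultimately show ?thesis using r ez[of x] True by (simp add: trunc_def)
        qed
      next
        case False then show ?thesis using sg by (auto simp: trunc_def supp_on_def)
      qed
    qed
    then show "\<exists>s\<in>S. trunc (Suc j) s = \<sigma>" using S_comp[OF s(1) e(1)] by blast
  qed
qed

end

definition par :: "bool list set \<Rightarrow> (bool list \<Rightarrow> bit) \<Rightarrow> bit" where
  "par A z = (\<Sum>v\<in>A. z v)"

definition rst :: "bool list set \<Rightarrow> (bool list \<Rightarrow> bit) \<Rightarrow> bool list \<Rightarrow> bit" where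
  "rst A z = (\<lambda>v. if v \<in> A then z v else 0)"

lemma par_add: "par A (\<lambda>v. z v + y v) = par A z + par A y"
  by (simp add: par_def sum.distrib)

lemma par_union: "finite A \<Longrightarrow> finite B \<Longrightarrow> A \<inter> B = {} \<Longrightarrow> par (A \<union> B) z = par A z + par B z"
  by (simp add: par_def sum.union_disjoint)

lemma par_flip: assumes "finite A" "a \<in> A" shows "par A (z(a := z a + 1)) = par A z + 1"
proof -
  have "par A (z(a := z a + 1)) = (z a + 1) + (\<Sum>v\<in>A - {a}. (z(a := z a + 1)) v)"
    using assms by (simp add: par_def sum.remove)
  also have "(\<Sum>v\<in>A - {a}. (z(a := z a + 1)) v) = (\<Sum>v\<in>A - {a}. z v)"
    by (rule sum.cong) auto
  also have "z a + 1 + (\<Sum>v\<in>A - {a}. z v) = par A z + 1"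
    using assms by (simp add: par_def sum.remove add.commute add.left_commute)
  finally show ?thesis .
qed

lemma par_flip_out: "a \<notin> A \<Longrightarrow> par A (z(a := x)) = par A z"
  unfolding par_def by (rule sum.cong) auto

lemma bit_eq_add1: "(x::bit) \<noteq> 0 \<longleftrightarrow> x = 1" by simp

lemma halve:
  assumes X: "finite X" and A: "finite A" "a \<in> A" and cl: "\<And>z. z \<in> X \<Longrightarrow> z(a := z a + 1) \<in> X"
  shows "2 * card {z\<in>X. par A z = 0} = card X"
proof -
  let ?f = "\<lambda>z::bool list \<Rightarrow> bit. z(a := z a + 1)"
  let ?E = "{z\<in>X. par A z = 0}" and ?O = "{z\<in>X. par A z = 1}"
  have inv: "\<And>z. ?f (?f z) = z" by (simp add: fun_eq_iff)
  have "bij_betw ?f ?E ?O"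
  proof (rule bij_betw_byWitness[where f' = ?f])
    show "\<forall>z\<in>?E. ?f (?f z) = z" using inv by blast
    show "\<forall>z\<in>?O. ?f (?f z) = z" using inv by blast
    show "?f ` ?E \<subseteq> ?O"
    proof
      fix y assume "y \<in> ?f ` ?E"
      then obtain z where z: "z \<in> X" "par A z = 0" "y = ?f z" by blast
      then show "y \<in> ?O" using cl[OF z(1)] par_flip[OF A, of z] by simp
    qed
    show "?f ` ?O \<subseteq> ?E"
    proof
      fix y assume "y \<in> ?f ` ?O"
      then obtain z where z: "z \<in> X" "par A z = 1" "y = ?f z" by blast
      then show "y \<in> ?E" using cl[OF z(1)] par_flip[OF A, of z] by simp
    qed
  qed
  then have c: "card ?E = card ?O" by (rule bij_betw_same_card)
  have "X = ?E \<union> ?O"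
  proof
    show "X \<subseteq> ?E \<union> ?O"
    proof
      fix z assume "z \<in> X" then show "z \<in> ?E \<union> ?O" using bit_cases2[of "par A z"] by blast
    qed
  qed blast
  moreover have "?E \<inter> ?O = {}" by auto
  moreover have "finite ?E" "finite ?O" using X by simp_all
  ultimately have "card X = card ?E + card ?O"
    using card_Un_disjoint[of ?E ?O] by (metis (no_types, lifting))
  then show ?thesis using c by simp
qed


definition lv :: "nat \<Rightarrow> bool list set" where "lv d = {v. length v = d - 1}"
definition below :: "nat \<Rightarrow> bool list \<Rightarrow> bool list set" where
  "below d u = {v. length v = d - 1 \<and> prefix u v}"
definition EE :: "nat \<Rightarrow> (bool list \<Rightarrow> bit) set" where
  "EE d = {z \<in> supp_on (lv d). par (below d [False]) z = 0 \<and> par (below d [True]) z = 0}"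

lemma finite_lv: "finite (lv d)" using finite_level by (simp add: lv_def)
lemma below_sub: "below d u \<subseteq> lv d" by (auto simp: below_def lv_def)
lemma finite_below: "finite (below d u)" by (rule finite_subset[OF below_sub finite_lv])

lemma nth_act: "k < length w \<Longrightarrow> act f w ! k = (w ! k \<noteq> (f (take k w) = 1))"
proof (induction w arbitrary: f k)
  case Nil then show ?case by simp
next
  case (Cons x w) then show ?case by (cases k) auto
qed

lemma act_below:
  assumes "act s u = u'" "length u \<le> d - 1"
  shows "act s ` below d u = below d u'"
proof
  show "act s ` below d u \<subseteq> below d u'"
  proof
    fix y assume "y \<in> act s ` below d u"
    then obtain v where v: "v \<in> below d u" "y = act s v" by blast
    then obtain r where vr: "v = u @ r" by (auto simp: below_def prefix_def)
    then have "y = u' @ act (\<lambda>z. s (u @ z)) r" using v assms by (simp add: act_append)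
    moreover have "length y = d - 1" using v by (simp add: below_def)
    ultimately show "y \<in> below d u'" by (simp add: below_def)
  qed
  show "below d u' \<subseteq> act s ` below d u"
  proof
    fix y assume y: "y \<in> below d u'"
    obtain v where v: "act s v = y" using act_surj by blast
    have lu: "length u' = length u" using assms by auto
    have "act s (take (length u) v) = take (length u) (act s v)" by (simp add: take_act)
    also have "\<dots> = take (length u) y" using v by simp
    also have "\<dots> = u'" using y lu by (auto simp: below_def prefix_def)
    finally have "take (length u) v = u" using assms act_inj by (metis injD)
    then have "prefix u v" by (metis prefix_def append_take_drop_id)
    moreover have "length v = d - 1" using v y by (auto simp: below_def)
    ultimately show "y \<in> act s ` below d u" using v by (auto simp: below_def)
  qed
qed

lemma par_act:
  assumes "act s u = u'" "length u \<le> d - 1"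
  shows "par (below d u) (\<lambda>v. z (act s v)) = par (below d u') z"
proof -
  have "par (below d u') z = (\<Sum>v\<in>act s ` below d u. z v)" using act_below[OF assms] by (simp add: par_def)
  also have "\<dots> = (\<Sum>v\<in>below d u. z (act s v))"
    using act_inj by (simp add: sum.reindex inj_on_def inj_def)
  finally show ?thesis by (simp add: par_def)
qed

lemma below_split:
  assumes "length u < d - 1"
  shows "below d u = below d (u @ [False]) \<union> below d (u @ [True])"
    and "below d (u @ [False]) \<inter> below d (u @ [True]) = {}"
proof -
  show "below d (u @ [False]) \<inter> below d (u @ [True]) = {}"
    by (auto simp: below_def prefix_def)
  show "below d u = below d (u @ [False]) \<union> below d (u @ [True])"
  proof
    show "below d u \<subseteq> below d (u @ [False]) \<union> below d (u @ [True])"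
    proof
      fix v assume "v \<in> below d u"
      then obtain r where r: "v = u @ r" "length v = d - 1" by (auto simp: below_def prefix_def)
      then obtain b r' where "r = b # r'" using assms by (cases r) auto
      then show "v \<in> below d (u @ [False]) \<union> below d (u @ [True])" using r
        by (cases b) (auto simp: below_def prefix_def)
    qed
    show "below d (u @ [False]) \<union> below d (u @ [True]) \<subseteq> below d u"
      by (auto simp: below_def prefix_def)
  qed
qed

lemma par_split:
  assumes "length u < d - 1"
  shows "par (below d u) z = par (below d (u @ [False])) z + par (below d (u @ [True])) z"
  using below_split[OF assms] finite_below by (simp add: par_union)

lemma card_EE: assumes d2: "2 \<le> d" shows "card (EE d) = 2 ^ (2 ^ (d - 1) - 2)"
proof -
  define X0 where "X0 = supp_on (lv d)"
  define X1 where "X1 = {z \<in> X0. par (below d [False]) z = 0}"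
  define a where "a = False # replicate (d - 2) False"
  define b where "b = True # replicate (d - 2) False"
  have la: "length a = d - 1" "length b = d - 1" using d2 by (simp_all add: a_def b_def)
  have aL: "a \<in> below d [False]" "b \<in> below d [True]" "b \<notin> below d [False]"
    using la by (auto simp: below_def a_def b_def)
  have fX0: "finite X0" using finite_supp_level by (simp add: X0_def lv_def)
  have cX0: "card X0 = 2 ^ 2 ^ (d - 1)" using card_supp_level by (simp add: X0_def lv_def)
  have c1: "2 * card X1 = card X0" unfolding X1_def
  proof (rule halve[OF fX0 finite_below aL(1)])
    fix z assume "z \<in> X0" then show "z(a := z a + 1) \<in> X0" using la by (auto simp: X0_def supp_on_def lv_def)
  qed
  have fX1: "finite X1" using fX0 by (simp add: X1_def)
  have "EE d = {z \<in> X1. par (below d [True]) z = 0}" by (auto simp: EE_def X1_def X0_def)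
  moreover have "2 * card {z \<in> X1. par (below d [True]) z = 0} = card X1"
  proof (rule halve[OF fX1 finite_below aL(2)])
    fix z assume "z \<in> X1"
    then show "z(b := z b + 1) \<in> X1" using la aL(3) by (auto simp: X1_def X0_def supp_on_def lv_def par_flip_out)
  qed
  ultimately have "4 * card (EE d) = 2 ^ 2 ^ (d - 1)" using c1 cX0 by simp
  moreover have "(2::nat) ^ 2 ^ (d - 1) = 4 * 2 ^ (2 ^ (d - 1) - 2)"
  proof -
    have "(2::nat) ^ 1 \<le> 2 ^ (d - 1)" by (rule power_increasing) (use d2 in auto)
    then have "2 ^ (d - 1) = 2 + (2 ^ (d - 1) - (2::nat))" by simp
    then have "(2::nat) ^ 2 ^ (d - 1) = 2 ^ 2 * 2 ^ (2 ^ (d - 1) - 2)" by (metis power_add)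
    then show ?thesis by simp
  qed
  ultimately show ?thesis by simp
qed


lemma act_cong_prefix:
  "(\<And>k. k < length w \<Longrightarrow> f (take k w) = g (take k w)) \<Longrightarrow> act f w = act g w"
proof (induction w arbitrary: f g)
  case Nil then show ?case by simp
next
  case (Cons x w)
  have "f [] = g []" using Cons.prems[of 0] by simp
  moreover have "act (\<lambda>v. f (x#v)) w = act (\<lambda>v. g (x#v)) w"
  proof (rule Cons.IH)
    fix k assume "k < length w"
    then show "f (x # take k w) = g (x # take k w)" using Cons.prems[of "Suc k"] by simp
  qed
  ultimately show ?case by simp
qed

locale epg2 = epg +
  assumes d2: "2 \<le> d"
    and top0: "\<forall>\<sigma>\<in>supp_on {v. length v < d - 1}. \<exists>s\<in>lab ` P. trunc (d - 1) s = \<sigma>"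
    and cardL00: "card {s \<in> lab ` P. \<forall>v. length v < d - 1 \<longrightarrow> s v = 0} = 2 ^ (2 ^ (d - 1) - 2)"
begin

lemma topS: "\<sigma> \<in> supp_on {v. length v < d - 1} \<Longrightarrow> \<exists>s\<in>S. trunc (d - 1) s = \<sigma>"
  using top0 by (simp add: S_def)

lemma cardL0: "card L0 = 2 ^ (2 ^ (d - 1) - 2)"
  using cardL00 by (simp add: L0_def S_def)

lemma L0_supp: "l \<in> L0 \<Longrightarrow> l \<in> supp_on (lv d)"
proof -
  assume l: "l \<in> L0"
  have "\<And>v. length v \<noteq> d - 1 \<Longrightarrow> l v = 0"
  proof -
    fix v :: "bool list" assume "length v \<noteq> d - 1"
    then show "l v = 0" using l S_high[of l v] by (cases "length v < d - 1") (auto simp: L0_def)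
  qed
  then show ?thesis by (auto simp: supp_on_def lv_def)
qed

lemma L0_add: "l1 \<in> L0 \<Longrightarrow> l2 \<in> L0 \<Longrightarrow> (\<lambda>v. l1 v + l2 v) \<in> L0"
proof -
  assume a: "l1 \<in> L0" "l2 \<in> L0"
  then have "(\<lambda>v. l1 v + l2 v) \<in> S" by (intro S_same_top) (auto simp: L0_def)
  then show ?thesis using a by (auto simp: L0_def)
qed

lemma L0_zero: "(\<lambda>_. 0) \<in> L0" using S_zero by (simp add: L0_def)

lemma L0_conj: "s \<in> S \<Longrightarrow> z \<in> L0 \<Longrightarrow> (\<lambda>v. z (act s v)) \<in> L0"
proof -
  assume s: "s \<in> S" and z: "z \<in> L0"
  have zS: "z \<in> S" and z0: "\<And>v. length v < d - 1 \<Longrightarrow> z v = 0" using z by (auto simp: L0_def)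
  have "comp z s \<in> S" using S_comp[OF zS s] .
  moreover have "\<And>v. length v < d - 1 \<Longrightarrow> comp z s v = s v" using z0 by (simp add: comp_def)
  ultimately have "(\<lambda>v. comp z s v + s v) \<in> S" using s by (intro S_same_top) auto
  moreover have "(\<lambda>v. comp z s v + s v) = (\<lambda>v. z (act s v))" by (auto simp: comp_def fun_eq_iff)
  ultimately have "(\<lambda>v. z (act s v)) \<in> S" by simp
  then show ?thesis using z0 by (auto simp: L0_def)
qed

lemma exists_map:
  assumes l: "length u' = length u" "length u \<le> d - 1"
  shows "\<exists>s\<in>S. act s u = u'"
proof -
  define \<sigma> where "\<sigma> = (\<lambda>x. if prefix x u \<and> length x < length u then (if u ! length x = u' ! length x then 0 else (1::bit)) else 0)"
  have "\<sigma> \<in> supp_on {v. length v < d - 1}" using l by (auto simp: supp_on_def \<sigma>_def)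
  then obtain s where s: "s \<in> S" "trunc (d - 1) s = \<sigma>" using topS by blast
  have "act s u = act \<sigma> u"
  proof (rule act_cong)
    fix v :: "bool list" assume "length v < length u"
    then have "trunc (d - 1) s v = s v" using l by (simp add: trunc_def)
    then show "s v = \<sigma> v" using s(2) by simp
  qed
  also have "act \<sigma> u = u'"
  proof (rule nth_equalityI)
    show "length (act \<sigma> u) = length u'" using l by simp
    fix k assume "k < length (act \<sigma> u)"
    then have k: "k < length u" by simp
    have "\<sigma> (take k u) = (if u ! k = u' ! k then 0 else 1)"
      using k by (simp add: \<sigma>_def take_is_prefix min_def)
    then show "act \<sigma> u ! k = u' ! k" using k by (simp add: nth_act)
  qed
  finally show ?thesis using s(1) by blast
qed

lemma swap_elem:
  assumes lu: "length u < d - 1"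
  shows "\<exists>e\<in>S. act e (u @ [False]) = u @ [True] \<and> act e (u @ [True]) = u @ [False]
              \<and> (\<forall>v. \<not> prefix u v \<longrightarrow> length v \<le> d - 1 \<longrightarrow> act e v = v)
              \<and> (\<forall>v. length v \<le> length u \<longrightarrow> act e v = v)"
proof -
  define \<sigma> where "\<sigma> = (\<lambda>x. if x = u then (1::bit) else 0)"
  have "\<sigma> \<in> supp_on {v. length v < d - 1}" using lu by (auto simp: supp_on_def \<sigma>_def)
  then obtain e where e: "e \<in> S" "trunc (d - 1) e = \<sigma>" using topS by blast
  have ev: "\<And>x. length x < d - 1 \<Longrightarrow> e x = \<sigma> x"
  proof -
    fix x :: "bool list" assume "length x < d - 1"
    then have "trunc (d - 1) e x = e x" by (simp add: trunc_def)
    then show "e x = \<sigma> x" using e(2) by simp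
  qed
  have idv: "\<And>v. (\<And>k. k < length v \<Longrightarrow> take k v \<noteq> u) \<Longrightarrow> length v \<le> d - 1 \<Longrightarrow> act e v = v"
  proof -
    fix v :: "bool list" assume nv: "\<And>k. k < length v \<Longrightarrow> take k v \<noteq> u" and lv: "length v \<le> d - 1"
    have "act e v = act (\<lambda>_. 0) v"
    proof (rule act_cong_prefix)
      fix k assume "k < length v"
      then show "e (take k v) = 0" using nv[of k] ev[of "take k v"] lv by (simp add: \<sigma>_def)
    qed
    then show "act e v = v" by (simp add: act_zero)
  qed
  have a1: "act e u = u"
    by (rule idv) (use lu in \<open>auto simp: take_all_iff\<close>)
  have "act e (u @ [False]) = u @ [True]" "act e (u @ [True]) = u @ [False]"
    using a1 ev[OF lu] by (simp_all add: act_snoc \<sigma>_def)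
  moreover have "\<forall>v. \<not> prefix u v \<longrightarrow> length v \<le> d - 1 \<longrightarrow> act e v = v"
  proof (intro allI impI)
    fix v :: "bool list" assume "\<not> prefix u v" "length v \<le> d - 1"
    then show "act e v = v" by (intro idv) (auto simp: take_is_prefix)
  qed
  moreover have "\<forall>v. length v \<le> length u \<longrightarrow> act e v = v"
  proof (intro allI impI)
    fix v :: "bool list" assume "length v \<le> length u"
    then show "act e v = v" using lu by (intro idv) auto
  qed
  ultimately show ?thesis using e(1) by blast
qed


lemma rst_par: "par A (rst A z) = par A z"
  unfolding par_def rst_def by (rule sum.cong) auto

lemma cross:
  assumes lu: "length u < d - 1" and z: "z \<in> L0" and odd: "par (below d u) z = 1"
  shows "\<exists>c\<in>L0. (\<forall>v. v \<notin> below d u \<longrightarrow> c v = 0) \<and> par (below d (u @ [False])) c = 1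
            \<and> par (below d (u @ [True])) c = 1"
proof -
  obtain e where e: "e \<in> S" "act e (u @ [False]) = u @ [True]" "act e (u @ [True]) = u @ [False]"
    "\<forall>v. \<not> prefix u v \<longrightarrow> length v \<le> d - 1 \<longrightarrow> act e v = v" using swap_elem[OF lu] by blast
  define c where "c = (\<lambda>v. z v + z (act e v))"
  have cL: "c \<in> L0" unfolding c_def using L0_add[OF z L0_conj[OF e(1) z]] .
  have zs: "z \<in> supp_on (lv d)" using L0_supp[OF z] .
  have sup: "\<forall>v. v \<notin> below d u \<longrightarrow> c v = 0"
  proof (intro allI impI)
    fix v assume nv: "v \<notin> below d u"
    show "c v = 0"
    proof (cases "length v = d - 1")
      case True
      then have "\<not> prefix u v" using nv by (auto simp: below_def)
      then have "act e v = v" using e(4) True by simp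
      then show ?thesis by (simp add: c_def)
    next
      case False
      then show ?thesis using zs by (simp add: c_def supp_on_def lv_def)
    qed
  qed
  have l1: "length (u @ [False]) \<le> d - 1" "length (u @ [True]) \<le> d - 1" using lu by simp_all
  have "par (below d (u @ [False])) c = par (below d (u @ [False])) z + par (below d (u @ [True])) z"
    unfolding c_def par_add par_act[OF e(2) l1(1)] ..
  also have "\<dots> = 1" using par_split[OF lu, of z] odd by simp
  finally have p0: "par (below d (u @ [False])) c = 1" .
  have "par (below d (u @ [True])) c = par (below d (u @ [True])) z + par (below d (u @ [False])) z"
    unfolding c_def par_add par_act[OF e(3) l1(2)] ..
  also have "\<dots> = 1" using par_split[OF lu, of z] odd by (simp add: add.commute)
  finally have p1: "par (below d (u @ [True])) c = 1" .
  show ?thesis using cL sup p0 p1 by blast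
qed

definition Qp :: "bool list \<Rightarrow> bool" where
  "Qp u \<longleftrightarrow> (\<forall>z\<in>supp_on (below d u). par (below d u) z = 0 \<longrightarrow> z \<in> L0)"

lemma Qbase: assumes "length u = d - 1" shows "Qp u"
  unfolding Qp_def
proof (intro ballI impI)
  fix z assume z: "z \<in> supp_on (below d u)" "par (below d u) z = 0"
  have b: "below d u = {u}" using assms by (auto simp: below_def prefix_def)
  then have "z u = 0" using z(2) by (simp add: par_def)
  then have "z = (\<lambda>_. 0)" using z(1) b by (auto simp: supp_on_def fun_eq_iff)
  then show "z \<in> L0" using L0_zero by simp
qed

lemma Qstep:
  assumes lu: "length u < d - 1"
    and Q0: "Qp (u @ [False])" and Q1: "Qp (u @ [True])"
    and c: "c \<in> L0" "\<forall>v. v \<notin> below d u \<longrightarrow> c v = 0"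
           "par (below d (u @ [False])) c = 1" "par (below d (u @ [True])) c = 1"
  shows "Qp u"
proof -
  have even: "\<And>z. z \<in> supp_on (below d u) \<Longrightarrow> par (below d u) z = 0 \<Longrightarrow> par (below d (u @ [False])) z = 0 \<Longrightarrow> z \<in> L0"
  proof -
    fix z assume z: "z \<in> supp_on (below d u)" "par (below d u) z = 0" "par (below d (u @ [False])) z = 0"
    have z1p: "par (below d (u @ [True])) z = 0" using z(2,3) par_split[OF lu, of z] by simp
    define z0 where "z0 = rst (below d (u @ [False])) z"
    define z1 where "z1 = rst (below d (u @ [True])) z"
    have "z0 \<in> supp_on (below d (u @ [False]))" by (auto simp: z0_def rst_def supp_on_def)
    moreover have "par (below d (u @ [False])) z0 = 0" using z(3) by (simp add: z0_def rst_par)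
    ultimately have "z0 \<in> L0" using Q0 unfolding Qp_def by blast
    moreover have "z1 \<in> supp_on (below d (u @ [True]))" by (auto simp: z1_def rst_def supp_on_def)
    moreover have "par (below d (u @ [True])) z1 = 0" using z1p by (simp add: z1_def rst_par)
    ultimately have "z1 \<in> L0" using Q1 unfolding Qp_def by blast
    moreover note \<open>z0 \<in> L0\<close>
    moreover have "z = (\<lambda>v. z0 v + z1 v)"
    proof
      fix v show "z v = z0 v + z1 v"
        using z(1) below_split[OF lu] by (auto simp: z0_def z1_def rst_def supp_on_def)
    qed
    ultimately show "z \<in> L0" using L0_add by simp
  qed
  have cs: "c \<in> supp_on (below d u)" using c(2) by (auto simp: supp_on_def)
  have cp: "par (below d u) c = 0" using par_split[OF lu, of c] c(3,4) by simp
  show ?thesis unfolding Qp_def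
  proof (intro ballI impI)
    fix z assume z: "z \<in> supp_on (below d u)" "par (below d u) z = 0"
    show "z \<in> L0"
    proof (cases "par (below d (u @ [False])) z = 0")
      case True then show ?thesis using even z by blast
    next
      case False
      then have z1: "par (below d (u @ [False])) z = 1" using bit_cases2 by blast
      define w where "w = (\<lambda>v. z v + c v)"
      have "w \<in> supp_on (below d u)" using z(1) cs by (auto simp: w_def supp_on_def)
      moreover have "par (below d u) w = 0" using z(2) cp by (simp add: w_def par_add)
      moreover have "par (below d (u @ [False])) w = 0" using z1 c(3) by (simp add: w_def par_add)
      ultimately have "w \<in> L0" using even by blast
      then have "(\<lambda>v. w v + c v) \<in> L0" using L0_add c(1) by blast
      moreover have "(\<lambda>v. w v + c v) = z" by (simp add: w_def fun_eq_iff add.assoc)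
      ultimately show ?thesis by simp
    qed
  qed
qed

lemma odd_transport:
  assumes l: "length u = length u'" "length u \<le> d - 1" and z: "z \<in> L0" "par (below d u') z = 1"
  shows "\<exists>z'\<in>L0. par (below d u) z' = 1"
proof -
  obtain s where s: "s \<in> S" "act s u = u'" using exists_map[of u' u] l by auto
  have "(\<lambda>v. z (act s v)) \<in> L0" using L0_conj[OF s(1) z(1)] .
  moreover have "par (below d u) (\<lambda>v. z (act s v)) = 1" using par_act[OF s(2) l(2)] z(2) by simp
  ultimately show ?thesis by blast
qed


lemma even_up:
  assumes j: "j < d - 1" and ev: "\<forall>u'. length u' = Suc j \<longrightarrow> (\<forall>z\<in>L0. par (below d u') z = 0)"
  shows "\<forall>u. length u = j \<longrightarrow> (\<forall>z\<in>L0. par (below d u) z = 0)"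
proof (intro allI impI ballI)
  fix u :: "bool list" and z assume "length u = j" "z \<in> L0"
  then show "par (below d u) z = 0" using par_split[of u d z] j ev by simp
qed

lemma even_up_many:
  assumes ev: "\<forall>u'. length u' = j \<longrightarrow> (\<forall>z\<in>L0. par (below d u') z = 0)" and j: "j < d"
  shows "m \<le> j \<Longrightarrow> \<forall>u. length u = j - m \<longrightarrow> (\<forall>z\<in>L0. par (below d u) z = 0)"
proof (induction m)
  case 0 then show ?case using ev by simp
next
  case (Suc m)
  have "j - Suc m < d - 1" using Suc.prems j by simp
  moreover have "Suc (j - Suc m) = j - m" using Suc.prems by simp
  ultimately show ?case using even_up[of "j - Suc m"] Suc by simp
qed

lemma card_less_contr:
  assumes "A \<subseteq> B" "finite B" "x \<in> B" "x \<notin> A" shows "card A < card B"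
  using assms by (metis psubsetI psubset_card_mono)

lemma odd_exists:
  assumes j: "2 \<le> j" "j < d - 1" and lu: "length u = j"
  shows "\<exists>z\<in>L0. par (below d u) z = 1"
proof (rule ccontr)
  assume "\<not> (\<exists>z\<in>L0. par (below d u) z = 1)"
  then have u0: "\<forall>z\<in>L0. par (below d u) z = 0" using bit_cases2 by blast
  have all: "\<forall>u'. length u' = j \<longrightarrow> (\<forall>z\<in>L0. par (below d u') z = 0)"
  proof (intro allI impI ballI)
    fix u' :: "bool list" and z assume u': "length u' = j" and z: "z \<in> L0"
    show "par (below d u') z = 0"
    proof (rule ccontr)
      assume "par (below d u') z \<noteq> 0"
      then have "par (below d u') z = 1" by simp
      then obtain z' where "z' \<in> L0" "par (below d u) z' = 1"
        using odd_transport[of u u' z] lu u' j z by auto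
      then show False using u0 by auto
    qed
  qed
  have lev2: "\<forall>u. length u = 2 \<longrightarrow> (\<forall>z\<in>L0. par (below d u) z = 0)"
    using even_up_many[OF all, of "j - 2"] j by simp
  define E4 where "E4 = {z \<in> EE d. par (below d [False, False]) z = 0}"
  have d3: "3 \<le> d" using j by simp
  have L0E4: "L0 \<subseteq> E4"
  proof
    fix z assume z: "z \<in> L0"
    have p1: "par (below d [False]) z = par (below d [False, False]) z + par (below d [False, True]) z"
      using par_split[of "[False]" d z] d3 by simp
    have p2: "par (below d [True]) z = par (below d [True, False]) z + par (below d [True, True]) z"
      using par_split[of "[True]" d z] d3 by simp
    show "z \<in> E4" using lev2 z p1 p2 L0_supp[OF z] by (simp add: E4_def EE_def)
  qed
  define a where "a = [False, False] @ replicate (d - 3) False"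
  define b where "b = [False, True] @ replicate (d - 3) False"
  define w where "w = (\<lambda>v. if v = a \<or> v = b then (1::bit) else 0)"
  have ab: "a \<noteq> b" by (simp add: a_def b_def)
  have la: "length a = d - 1" "length b = d - 1" using d3 by (simp_all add: a_def b_def)
  have wsupp: "w \<in> supp_on (lv d)" using la by (auto simp: w_def supp_on_def lv_def)
  have parw: "\<And>A. finite A \<Longrightarrow> par A w = (if a \<in> A then 1 else 0) + (if b \<in> A then 1 else 0)"
  proof -
    fix A :: "bool list set" assume fA: "finite A"
    have "par A w = (\<Sum>v\<in>A. (if v = a then 1 else 0) + (if v = b then (1::bit) else 0))"
      unfolding par_def w_def by (rule sum.cong) (use ab in auto)
    also have "\<dots> = (if a \<in> A then 1 else 0) + (if b \<in> A then 1 else 0)"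
      using fA by (simp add: sum.distrib)
    finally show "par A w = (if a \<in> A then 1 else 0) + (if b \<in> A then 1 else 0)" .
  qed
  have inb: "a \<in> below d [False]" "b \<in> below d [False]" "a \<notin> below d [True]" "b \<notin> below d [True]"
    "a \<in> below d [False, False]" "b \<notin> below d [False, False]"
    using la by (auto simp: below_def a_def b_def)
  have wE: "w \<in> EE d" using wsupp inb by (simp add: EE_def parw[OF finite_below])
  have wE4: "w \<notin> E4" using inb by (simp add: E4_def parw[OF finite_below])
  have finEE: "finite (EE d)"
    using finite_supp_level[of "d - 1"] by (rule finite_subset[rotated]) (auto simp: EE_def lv_def)
  have "E4 \<subseteq> EE d" by (auto simp: E4_def)
  then have "card E4 < card (EE d)" using card_less_contr[OF _ finEE wE wE4] by blast
  moreover have "card L0 \<le> card E4" using L0E4 by (rule card_mono[rotated]) (use finEE \<open>E4 \<subseteq> EE d\<close> finite_subset in blast)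
  ultimately show False using cardL0 card_EE[OF d2] by simp
qed


lemma finite_EE: "finite (EE d)"
  using finite_supp_level[of "d - 1"] by (rule finite_subset[rotated]) (auto simp: EE_def lv_def)

lemma Q_all:
  assumes oF: "\<exists>z\<in>L0. par (below d [False]) z = 1" and oT: "\<exists>z\<in>L0. par (below d [True]) z = 1"
  shows "m \<le> d - 2 \<Longrightarrow> \<forall>u. length u = d - 1 - m \<longrightarrow> Qp u"
proof (induction m)
  case 0 then show ?case using Qbase by simp
next
  case (Suc m)
  show ?case
  proof (intro allI impI)
    fix u :: "bool list" assume lu: "length u = d - 1 - Suc m"
    have lu': "length u < d - 1" using lu Suc.prems by simp
    have ch: "length (u @ [False]) = d - 1 - m" "length (u @ [True]) = d - 1 - m" using lu Suc.prems by simp_all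
    have Q0: "Qp (u @ [False])" and Q1: "Qp (u @ [True])" using Suc.IH Suc.prems ch by simp_all
    have "\<exists>z\<in>L0. par (below d u) z = 1"
    proof (cases "2 \<le> length u")
      case True then show ?thesis using odd_exists[OF True lu'] by simp
    next
      case False
      then have "length u = 1" using lu Suc.prems by simp
      then obtain b where "u = [b]" by (cases u) auto
      then show ?thesis using oF oT by (cases b) auto
    qed
    then obtain z where z: "z \<in> L0" "par (below d u) z = 1" by blast
    obtain c where "c \<in> L0" "\<forall>v. v \<notin> below d u \<longrightarrow> c v = 0"
      "par (below d (u @ [False])) c = 1" "par (below d (u @ [True])) c = 1"
      using cross[OF lu' z] by blast
    then show "Qp u" using Qstep[OF lu' Q0 Q1] by blast
  qed
qed

lemma L0_sub_EE: "L0 \<subseteq> EE d"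
proof (rule ccontr)
  assume "\<not> L0 \<subseteq> EE d"
  then obtain z where z: "z \<in> L0" "z \<notin> EE d" by blast
  have zs: "z \<in> supp_on (lv d)" using L0_supp[OF z(1)] .
  have l1: "length [False] \<le> d - 1" "length [True] \<le> d - 1" using d2 by simp_all
  have "par (below d [False]) z = 1 \<or> par (below d [True]) z = 1"
    using z(2) zs bit_cases2 by (auto simp: EE_def)
  then have oF: "\<exists>z\<in>L0. par (below d [False]) z = 1" and oT: "\<exists>z\<in>L0. par (below d [True]) z = 1"
    using odd_transport[of "[False]" "[True]"] odd_transport[of "[True]" "[False]"] z(1) l1 by auto
  have "d - 1 - (d - 2) = 1" using d2 by simp
  then have Q1: "\<forall>u. length u = 1 \<longrightarrow> Qp u" using Q_all[OF oF oT, of "d - 2"] by simp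
  have QF: "Qp [False]" "Qp [True]" using Q1 by auto
  have "EE d \<subseteq> L0"
  proof
    fix y assume y: "y \<in> EE d"
    define y0 where "y0 = rst (below d [False]) y"
    define y1 where "y1 = rst (below d [True]) y"
    have "y0 \<in> supp_on (below d [False])" by (auto simp: y0_def rst_def supp_on_def)
    moreover have "par (below d [False]) y0 = 0" using y by (simp add: y0_def rst_par EE_def)
    ultimately have y0L: "y0 \<in> L0" using QF(1) unfolding Qp_def by blast
    have "y1 \<in> supp_on (below d [True])" by (auto simp: y1_def rst_def supp_on_def)
    moreover have "par (below d [True]) y1 = 0" using y by (simp add: y1_def rst_par EE_def)
    ultimately have y1L: "y1 \<in> L0" using QF(2) unfolding Qp_def by blast
    have "y = (\<lambda>v. y0 v + y1 v)"
    proof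
      fix v show "y v = y0 v + y1 v"
      proof (cases "length v = d - 1")
        case True
        have "v \<noteq> []" using True d2 by auto
        then obtain bb r where v: "v = bb # r" by (cases v) auto
        then have "v \<in> below d [False] \<or> v \<in> below d [True]" using True
          by (cases bb) (auto simp: below_def)
        moreover have "\<not> (v \<in> below d [False] \<and> v \<in> below d [True])" by (auto simp: below_def v)
        ultimately show ?thesis by (auto simp: y0_def y1_def rst_def)
      next
        case False
        then have "y v = 0" using y by (auto simp: EE_def supp_on_def lv_def)
        moreover have "v \<notin> below d [False]" "v \<notin> below d [True]" using False by (auto simp: below_def)
        ultimately show ?thesis by (simp add: y0_def y1_def rst_def)
      qed
    qed
    then show "y \<in> L0" using L0_add[OF y0L y1L] by simp
  qed
  then have "card (EE d) < card L0" using card_less_contr[OF _ finite_L0 z(1) z(2)] by blast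
  then show False using cardL0 card_EE[OF d2] by simp
qed

lemma L0_eq_EE: "L0 = EE d"
  using card_subset_eq[OF finite_EE L0_sub_EE] cardL0 card_EE[OF d2] by simp


abbreviation pL :: "(bool list \<Rightarrow> bit) \<Rightarrow> bit" where "pL s \<equiv> par (below d [False]) s"
abbreviation pR :: "(bool list \<Rightarrow> bit) \<Rightarrow> bit" where "pR s \<equiv> par (below d [True]) s"

lemma same_top_par:
  assumes s: "s \<in> S" "s' \<in> S" and top: "\<And>v. length v < d - 1 \<Longrightarrow> s v = s' v"
  shows "pL s = pL s'" "pR s = pR s'"
proof -
  have "(\<lambda>v. s v + s' v) \<in> S" using S_same_top[OF s top] .
  then have "(\<lambda>v. s v + s' v) \<in> L0" using top by (auto simp: L0_def)
  then have "(\<lambda>v. s v + s' v) \<in> EE d" using L0_eq_EE by simp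
  then have "pL s + pL s' = 0" "pR s + pR s' = 0" by (simp_all add: EE_def par_add)
  then show "pL s = pL s'" "pR s = pR s'" by (metis add.commute bit_add_self2 add_0_right)+
qed

lemma comp_par:
  assumes "t \<in> S"
  shows "pL (comp s t) = pL t + (if t [] = 1 then pR s else pL s)"
    and "pR (comp s t) = pR t + (if t [] = 1 then pL s else pR s)"
proof -
  have l: "length [False] \<le> d - 1" "length [True] \<le> d - 1" using d2 by simp_all
  have a0: "act t [False] = [t [] = 1]" and a1: "act t [True] = [t [] \<noteq> 1]" by simp_all
  have "pL (comp s t) = pL t + pL (\<lambda>v. s (act t v))" by (simp add: comp_def par_add)
  also have "pL (\<lambda>v. s (act t v)) = par (below d [t [] = 1]) s" using par_act[OF a0 l(1)] .
  finally show "pL (comp s t) = pL t + (if t [] = 1 then pR s else pL s)" by simp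
  have "pR (comp s t) = pR t + pR (\<lambda>v. s (act t v))" by (simp add: comp_def par_add)
  also have "pR (\<lambda>v. s (act t v)) = par (below d [t [] \<noteq> 1]) s" using par_act[OF a1 l(2)] .
  finally show "pR (comp s t) = pR t + (if t [] = 1 then pL s else pR s)" by simp
qed

definition T :: "bool list set" where "T = {v. length v < d - 1}"
definition ev :: "bool list \<Rightarrow> bool list \<Rightarrow> bit" where
  "ev v = (SOME e. e \<in> S \<and> trunc (d - 1) e = (\<lambda>x. if x = v then 1 else 0))"
definition cL :: "bool list \<Rightarrow> bit" where "cL v = pL (ev v)"
definition cR :: "bool list \<Rightarrow> bit" where "cR v = pR (ev v)"

lemma finite_T: "finite T" using finite_lt by (simp add: T_def)

lemma ev_prop: assumes "v \<in> T" shows "ev v \<in> S" "trunc (d - 1) (ev v) = (\<lambda>x. if x = v then 1 else 0)"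
proof -
  have "(\<lambda>x. if x = v then (1::bit) else 0) \<in> supp_on {v. length v < d - 1}"
    using assms by (auto simp: supp_on_def T_def)
  then have "\<exists>e. e \<in> S \<and> trunc (d - 1) e = (\<lambda>x. if x = v then 1 else 0)" using topS by blast
  then have "ev v \<in> S \<and> trunc (d - 1) (ev v) = (\<lambda>x. if x = v then 1 else 0)"
    unfolding ev_def by (rule someI_ex)
  then show "ev v \<in> S" "trunc (d - 1) (ev v) = (\<lambda>x. if x = v then 1 else 0)" by simp_all
qed

lemma zero_top_par: "s \<in> S \<Longrightarrow> (\<And>v. length v < d - 1 \<Longrightarrow> s v = 0) \<Longrightarrow> pL s = 0 \<and> pR s = 0"
  using same_top_par[of s "\<lambda>_. 0"] S_zero by (simp add: par_def)

lemma lin_aux: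
  "\<forall>s\<in>S. card {v\<in>T. s v \<noteq> 0} = n \<longrightarrow> pL s = (\<Sum>v\<in>T. s v * cL v) \<and> pR s = (\<Sum>v\<in>T. s v * cR v)"
proof (induction n)
  case 0
  show ?case
  proof (intro ballI impI)
    fix s assume s: "s \<in> S" "card {v\<in>T. s v \<noteq> 0} = 0"
    then have z: "\<And>v. v \<in> T \<Longrightarrow> s v = 0" using finite_T by auto
    then have "pL s = 0 \<and> pR s = 0" using zero_top_par[OF s(1)] by (simp add: T_def)
    moreover have "(\<Sum>v\<in>T. s v * cL v) = 0" "(\<Sum>v\<in>T. s v * cR v) = 0" using z by simp_all
    ultimately show "pL s = (\<Sum>v\<in>T. s v * cL v) \<and> pR s = (\<Sum>v\<in>T. s v * cR v)" by simp
  qed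
next
  case (Suc n)
  show ?case
  proof (intro ballI impI)
    fix s assume s: "s \<in> S" "card {v\<in>T. s v \<noteq> 0} = Suc n"
    define A where "A = {v\<in>T. s v \<noteq> 0}"
    have fA: "finite A" using finite_T by (simp add: A_def)
    have cA: "card A = Suc n" using s(2) by (simp add: A_def)
    have neA: "A \<noteq> {}"
    proof
      assume "A = {}" then show False using cA by simp
    qed
    define m where "m = Max (length ` A)"
    have "m \<in> length ` A" using fA neA by (simp add: m_def)
    then obtain v where v: "v \<in> A" "length v = m" by auto
    have mx: "\<And>x. x \<in> A \<Longrightarrow> length x \<le> m" using fA by (simp add: m_def)
    have vT: "v \<in> T" and sv: "s v = 1" using v(1) by (auto simp: A_def)
    define \<sigma>' where "\<sigma>' = (\<lambda>x. if x \<in> T \<and> x \<noteq> v then s x else 0)"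
    have "\<sigma>' \<in> supp_on {v. length v < d - 1}" by (auto simp: supp_on_def \<sigma>'_def T_def)
    then obtain r where r: "r \<in> S" "trunc (d - 1) r = \<sigma>'" using topS by blast
    have rT: "\<And>x. x \<in> T \<Longrightarrow> r x = \<sigma>' x"
    proof -
      fix x assume "x \<in> T"
      then have "trunc (d - 1) r x = r x" by (simp add: trunc_def T_def)
      then show "r x = \<sigma>' x" using r(2) by simp
    qed
    have "{x\<in>T. r x \<noteq> 0} = A - {v}" using rT by (auto simp: A_def \<sigma>'_def split: if_splits)
    then have "card {x\<in>T. r x \<noteq> 0} = n" using s(2) v(1) fA by (simp add: A_def)
    then have IH: "pL r = (\<Sum>v\<in>T. r v * cL v)" "pR r = (\<Sum>v\<in>T. r v * cR v)" using Suc.IH r(1) by auto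
    define e where "e = ev v"
    have e: "e \<in> S" "trunc (d - 1) e = (\<lambda>x. if x = v then 1 else 0)" using ev_prop[OF vT] by (simp_all add: e_def)
    have eT: "\<And>x. x \<in> T \<Longrightarrow> e x = (if x = v then 1 else 0)"
    proof -
      fix x assume "x \<in> T"
      then have "trunc (d - 1) e x = e x" by (simp add: trunc_def T_def)
      then show "e x = (if x = v then 1 else 0)" using e(2) by simp
    qed
    have qs: "\<And>x. length x < d - 1 \<Longrightarrow> comp r e x = s x"
    proof -
      fix x :: "bool list" assume lx: "length x < d - 1"
      then have xT: "x \<in> T" by (simp add: T_def)
      have "r (act e x) = r x"
      proof (cases "length x \<le> length v")
        case True
        have "act e x = act (\<lambda>_. 0) x"
        proof (rule act_cong_prefix)
          fix k assume k: "k < length x"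
          then have "take k x \<in> T" "take k x \<noteq> v" using True lx by (auto simp: T_def)
          then show "e (take k x) = 0" using eT by simp
        qed
        then show ?thesis by (simp add: act_zero)
      next
        case False
        have "act e x \<in> T" using lx by (simp add: T_def)
        then have "r (act e x) = \<sigma>' (act e x)" by (rule rT)
        also have "\<dots> = 0" using False mx[of "act e x"] v(2) bit_cases2[of "s (act e x)"] by (auto simp: \<sigma>'_def A_def)
        also have "0 = r x" using rT[OF xT] False mx[of x] v(2) bit_cases2[of "s x"] xT by (auto simp: \<sigma>'_def A_def)
        finally show ?thesis .
      qed
      then have "comp r e x = e x + r x" by (simp add: comp_def)
      also have "\<dots> = s x" using eT[OF xT] rT[OF xT] sv by (auto simp: \<sigma>'_def xT)
      finally show "comp r e x = s x" .
    qed
    have q: "comp r e \<in> S" using S_comp[OF r(1) e(1)] .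
    have ps: "pL s = pL (comp r e)" "pR s = pR (comp r e)"
      using same_top_par[OF s(1) q] qs by auto
    have sum_s: "(\<Sum>x\<in>T. s x * c x) = (\<Sum>x\<in>T. r x * c x) + c v" for c :: "bool list \<Rightarrow> bit"
    proof -
      have "(\<Sum>x\<in>T. s x * c x) = (\<Sum>x\<in>T. r x * c x + (if x = v then c x else 0))"
        by (rule sum.cong) (use rT sv in \<open>auto simp: \<sigma>'_def\<close>)
      also have "\<dots> = (\<Sum>x\<in>T. r x * c x) + c v" using finite_T vT by (simp add: sum.distrib)
      finally show ?thesis .
    qed
    have cLe: "cL v = pL e" "cR v = pR e" by (simp_all add: cL_def cR_def e_def)
    show "pL s = (\<Sum>v\<in>T. s v * cL v) \<and> pR s = (\<Sum>v\<in>T. s v * cR v)"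
    proof (cases "v = []")
      case False
      then have "e [] = 0" using eT[of "[]"] d2 by (simp add: T_def)
      then show ?thesis using ps comp_par[OF e(1), of r] IH sum_s cLe by (simp add: add.commute)
    next
      case True
      then have "m = 0" using v(2) by simp
      have r0: "\<And>x. length x < d - 1 \<Longrightarrow> r x = 0"
      proof -
        fix x :: "bool list" assume lx: "length x < d - 1"
        show "r x = 0"
        proof (cases "x = []")
          case False
          then have "\<not> length x \<le> m" using \<open>m = 0\<close> by simp
          then have "x \<notin> A" using mx by blast
          then have "s x = 0" using lx bit_cases2[of "s x"] by (auto simp: A_def T_def)
          then show ?thesis using rT[of x] lx by (simp add: \<sigma>'_def T_def)
        qed (use rT True lx in \<open>simp add: \<sigma>'_def T_def\<close>)
      qed
      then have "pL r = 0 \<and> pR r = 0" using zero_top_par[OF r(1)] by blast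
      moreover have "(\<Sum>x\<in>T. r x * c x) = 0" for c :: "bool list \<Rightarrow> bit" using r0 by (simp add: T_def)
      ultimately show ?thesis using ps comp_par[OF e(1), of r] sum_s cLe by simp
    qed
  qed
qed

lemma lin: "s \<in> S \<Longrightarrow> pL s = (\<Sum>v\<in>T. s v * cL v) \<and> pR s = (\<Sum>v\<in>T. s v * cR v)"
  using lin_aux by blast

lemma S_add: assumes s: "s \<in> S" and t: "t \<in> S" shows "(\<lambda>v. s v + t v) \<in> S"
proof -
  have "trunc (d - 1) (\<lambda>v. s v + t v) \<in> supp_on {v. length v < d - 1}"
    by (auto simp: supp_on_def trunc_def)
  then obtain r where r: "r \<in> S" "trunc (d - 1) r = trunc (d - 1) (\<lambda>v. s v + t v)" using topS by blast
  have rT: "\<And>x. x \<in> T \<Longrightarrow> r x = s x + t x"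
  proof -
    fix x assume "x \<in> T"
    moreover have "trunc (d - 1) r x = trunc (d - 1) (\<lambda>v. s v + t v) x" using r(2) by simp
    ultimately show "r x = s x + t x" by (simp add: trunc_def T_def)
  qed
  have sumr: "(\<Sum>x\<in>T. r x * c x) = (\<Sum>x\<in>T. s x * c x) + (\<Sum>x\<in>T. t x * c x)" for c :: "bool list \<Rightarrow> bit"
  proof -
    have "(\<Sum>x\<in>T. r x * c x) = (\<Sum>x\<in>T. s x * c x + t x * c x)"
      by (rule sum.cong) (simp_all add: rT distrib_right)
    then show ?thesis by (simp add: sum.distrib)
  qed
  define y where "y = (\<lambda>v. s v + t v + r v)"
  have "pL y = pL s + pL t + pL r" "pR y = pR s + pR t + pR r" by (simp_all add: y_def par_add)
  then have py: "pL y = 0" "pR y = 0" using lin[OF s] lin[OF t] lin[OF r(1)] sumr by simp_all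
  have ys: "y \<in> supp_on (lv d)"
  proof -
    have "\<And>v. length v \<noteq> d - 1 \<Longrightarrow> y v = 0"
    proof -
      fix v :: "bool list" assume lv: "length v \<noteq> d - 1"
      show "y v = 0"
      proof (cases "length v < d - 1")
        case True then show ?thesis using rT[of v] by (simp add: y_def T_def)
      next
        case False then show ?thesis using lv S_high[OF s, of v] S_high[OF t, of v] S_high[OF r(1), of v]
          by (simp add: y_def)
      qed
    qed
    then show ?thesis by (auto simp: supp_on_def lv_def)
  qed
  have "y \<in> L0" using ys py L0_eq_EE by (simp add: EE_def)
  then have "(\<lambda>v. r v + y v) \<in> S" using S_add_L0[OF r(1)] by blast
  moreover have "(\<lambda>v. r v + y v) = (\<lambda>v. s v + t v)" by (simp add: y_def fun_eq_iff add.commute add.left_commute)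
  ultimately show ?thesis by simp
qed

end

context epg begin

definition pick :: "(bool list \<Rightarrow> bit) \<Rightarrow> bool \<Rightarrow> bool list \<Rightarrow> bit" where
  "pick s i = (SOME t. t \<in> S \<and> (\<forall>v. length v < d - 1 \<longrightarrow> t v = s (i # v)))"

lemma pick_prop:
  assumes "s \<in> S" shows "pick s i \<in> S" "\<And>v. length v < d - 1 \<Longrightarrow> pick s i v = s (i # v)"
proof -
  have "\<exists>t. t \<in> S \<and> (\<forall>v. length v < d - 1 \<longrightarrow> t v = s (i # v))" using S_ess[OF assms] by blast
  then have "pick s i \<in> S \<and> (\<forall>v. length v < d - 1 \<longrightarrow> pick s i v = s (i # v))"
    unfolding pick_def by (rule someI_ex)
  then show "pick s i \<in> S" "\<And>v. length v < d - 1 \<Longrightarrow> pick s i v = s (i # v)" by auto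
qed

fun Wrec :: "(bool list \<Rightarrow> bit) \<Rightarrow> bool list \<Rightarrow> bool list \<Rightarrow> bit" where
  "Wrec s [] = s"
| "Wrec s (i # r) = Wrec (pick s i) r"

lemma Wrec_S: "s \<in> S \<Longrightarrow> Wrec s r \<in> S"
  by (induction r arbitrary: s) (auto simp: pick_prop)

lemma Wrec_val: "s \<in> S \<Longrightarrow> length r + length v < d \<Longrightarrow> Wrec s r v = s (r @ v)"
proof (induction r arbitrary: s)
  case Nil then show ?case by simp
next
  case (Cons i r)
  have "Wrec s (i # r) v = Wrec (pick s i) r v" by simp
  also have "\<dots> = pick s i (r @ v)" using Cons.IH[OF pick_prop(1)[OF Cons.prems(1)]] Cons.prems(2) by simp
  also have "\<dots> = s (i # r @ v)" using pick_prop(2)[OF Cons.prems(1)] Cons.prems(2) by simp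
  finally show ?case by simp
qed

lemma Wrec_app: "Wrec s (r @ r') = Wrec (Wrec s r) r'"
  by (induction r arbitrary: s) auto

definition Cset :: "nat \<Rightarrow> (bool list \<Rightarrow> bit) set" where
  "Cset n = {h \<in> supp_on {v. length v < n}. \<forall>w. length w + d \<le> n \<longrightarrow> trunc d (shift h w) \<in> S}"

lemma extension:
  assumes n: "d \<le> n" and h: "h \<in> Cset n"
  shows "\<exists>f\<in>valid d S. trunc n f = h"
proof -
  define k where "k = n - d"
  define win where "win = (\<lambda>u. trunc d (shift h u))"
  have hs: "\<And>x. n \<le> length x \<Longrightarrow> h x = 0" using h by (auto simp: Cset_def supp_on_def)
  have winS: "\<And>u. length u \<le> k \<Longrightarrow> win u \<in> S" using h n by (auto simp: Cset_def win_def k_def)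
  define f where "f = (\<lambda>x. if length x < k then h x else Wrec (win (take k x)) (drop k x) [])"
  have fh: "\<And>x. length x < n \<Longrightarrow> f x = h x"
  proof -
    fix x :: "bool list" assume lx: "length x < n"
    show "f x = h x"
    proof (cases "length x < k")
      case False
      have "Wrec (win (take k x)) (drop k x) [] = win (take k x) (drop k x @ [])"
        by (rule Wrec_val) (use False lx n winS in \<open>auto simp: k_def\<close>)
      also have "\<dots> = h x"
      proof -
        have "length (drop k x) = length x - k" by simp
        also have "\<dots> < d" using lx n d1 unfolding k_def by arith
        finally have "length (drop k x) < d" .
        then show ?thesis by (simp add: win_def trunc_def shift_def)
      qed
      finally show ?thesis using False by (simp add: f_def)
    qed (simp add: f_def)
  qed
  have tf: "trunc n f = h"
  proof
    fix x show "trunc n f x = h x" using fh hs by (simp add: trunc_def)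
  qed
  have "f \<in> valid d S" unfolding valid_def
  proof (intro CollectI allI)
    fix w :: "bool list"
    show "trunc d (shift f w) \<in> S"
    proof (cases "length w \<le> k")
      case True
      have "trunc d (shift f w) = win w"
      proof
        fix v show "trunc d (shift f w) v = win w v"
          using fh[of "w @ v"] True n by (simp add: trunc_def shift_def win_def k_def)
      qed
      then show ?thesis using winS[OF True] by simp
    next
      case False
      define u where "u = take k w"
      define r where "r = drop k w"
      have wS: "Wrec (win u) r \<in> S" using Wrec_S winS[of u] by (simp add: u_def k_def)
      have "trunc d (shift f w) = trunc d (Wrec (win u) r)"
      proof
        fix v :: "bool list"
        show "trunc d (shift f w) v = trunc d (Wrec (win u) r) v"
        proof (cases "length v < d")
          case True
          have "f (w @ v) = Wrec (win u) (r @ v) []"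
            using False by (simp add: f_def u_def r_def)
          also have "\<dots> = Wrec (Wrec (win u) r) v []" by (simp add: Wrec_app)
          also have "\<dots> = Wrec (win u) r v" using Wrec_val[OF wS, of v "[]"] True by simp
          finally show ?thesis using True by (simp add: trunc_def shift_def)
        qed (simp add: trunc_def)
      qed
      also have "\<dots> = Wrec (win u) r" using S_trunc[OF wS] .
      finally show ?thesis using wS by simp
    qed
  qed
  then show ?thesis using tf by blast
qed

lemma C_eq: assumes n: "d \<le> n" shows "trunc n ` valid d S = Cset n"
proof
  show "trunc n ` valid d S \<subseteq> Cset n"
  proof
    fix h assume "h \<in> trunc n ` valid d S"
    then obtain f where f: "f \<in> valid d S" "h = trunc n f" by blast
    have "\<And>w. length w + d \<le> n \<Longrightarrow> trunc d (shift h w) = trunc d (shift f w)"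
      using f(2) by (auto simp: trunc_def shift_def fun_eq_iff)
    moreover have "h \<in> supp_on {v. length v < n}" using f(2) by (auto simp: supp_on_def trunc_def)
    ultimately show "h \<in> Cset n" using f(1) by (auto simp: Cset_def valid_def)
  qed
  show "Cset n \<subseteq> trunc n ` valid d S"
  proof
    fix h assume "h \<in> Cset n"
    then obtain f where "f \<in> valid d S" "trunc n f = h" using extension[OF n] by blast
    then show "h \<in> trunc n ` valid d S" by blast
  qed
qed

lemma Cset_d: "Cset d = S"
proof
  show "Cset d \<subseteq> S"
  proof
    fix h assume h: "h \<in> Cset d"
    then have "trunc d (shift h []) \<in> S" by (auto simp: Cset_def)
    moreover have "trunc d (shift h []) = h" using h by (auto simp: Cset_def supp_on_def trunc_def shift_def fun_eq_iff)
    ultimately show "h \<in> S" by simp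
  qed
  show "S \<subseteq> Cset d"
  proof
    fix s assume s: "s \<in> S"
    have "s \<in> supp_on {v. length v < d}" using S_supp s by blast
    moreover have "\<And>w. length w + d \<le> d \<Longrightarrow> trunc d (shift s w) \<in> S"
      using s S_trunc[OF s] by (simp add: shift_def)
    ultimately show "s \<in> Cset d" by (simp add: Cset_def)
  qed
qed


lemma L0_level: "l \<in> L0 \<Longrightarrow> length v \<noteq> d - 1 \<Longrightarrow> l v = 0"
  using S_high[of l v] by (cases "length v < d - 1") (auto simp: L0_def)

definition Kn :: "nat \<Rightarrow> (bool list \<Rightarrow> bit) set" where
  "Kn n = {k \<in> supp_on {v. length v = n}. \<forall>w. length w = Suc n - d \<longrightarrow> trunc d (shift k w) \<in> L0}"

definition ext :: "nat \<Rightarrow> (bool list \<Rightarrow> bit) \<Rightarrow> bool list \<Rightarrow> bit" where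
  "ext n h = trunc (Suc n) (SOME f. f \<in> valid d S \<and> trunc n f = h)"

lemma ext_prop:
  assumes n: "d \<le> n" and h: "h \<in> Cset n"
  shows "ext n h \<in> Cset (Suc n)" "trunc n (ext n h) = h"
proof -
  have "\<exists>f. f \<in> valid d S \<and> trunc n f = h" using extension[OF n h] by blast
  then have f: "(SOME f. f \<in> valid d S \<and> trunc n f = h) \<in> valid d S \<and> trunc n (SOME f. f \<in> valid d S \<and> trunc n f = h) = h"
    by (rule someI_ex)
  have "ext n h \<in> trunc (Suc n) ` valid d S" using f by (simp add: ext_def)
  then show "ext n h \<in> Cset (Suc n)" using C_eq[of "Suc n"] n by simp
  show "trunc n (ext n h) = h" using f by (simp add: ext_def trunc_trunc)
qed

lemma Cset_restrict:
  assumes "h' \<in> Cset (Suc n)" shows "trunc n h' \<in> Cset n"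
proof -
  have "\<And>w. length w + d \<le> n \<Longrightarrow> trunc d (shift (trunc n h') w) = trunc d (shift h' w)"
    by (auto simp: trunc_def shift_def fun_eq_iff)
  then show ?thesis using assms by (auto simp: Cset_def supp_on_def trunc_def)
qed

lemma fiber:
  assumes n: "d \<le> n" and h: "h \<in> Cset n"
  shows "{h' \<in> Cset (Suc n). trunc n h' = h} = (\<lambda>k v. ext n h v + k v) ` Kn n"
proof
  have e1: "ext n h \<in> Cset (Suc n)" and e2: "trunc n (ext n h) = h" using ext_prop[OF n h] by auto
  have eS: "\<And>w. length w + d \<le> Suc n \<Longrightarrow> trunc d (shift (ext n h) w) \<in> S" using e1 by (auto simp: Cset_def)
  have es: "\<And>v. Suc n \<le> length v \<Longrightarrow> ext n h v = 0" using e1 by (auto simp: Cset_def supp_on_def)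
  show "{h' \<in> Cset (Suc n). trunc n h' = h} \<subseteq> (\<lambda>k v. ext n h v + k v) ` Kn n"
  proof
    fix h' assume "h' \<in> {h' \<in> Cset (Suc n). trunc n h' = h}"
    then have h1: "h' \<in> Cset (Suc n)" and h2: "trunc n h' = h" by auto
    have hS: "\<And>w. length w + d \<le> Suc n \<Longrightarrow> trunc d (shift h' w) \<in> S" using h1 by (auto simp: Cset_def)
    have hs: "\<And>v. Suc n \<le> length v \<Longrightarrow> h' v = 0" using h1 by (auto simp: Cset_def supp_on_def)
    have agree: "\<And>v. length v < n \<Longrightarrow> h' v = ext n h v"
    proof -
      fix v :: "bool list" assume "length v < n"
      then have "trunc n h' v = h' v" "trunc n (ext n h) v = ext n h v" by (simp_all add: trunc_def)
      then show "h' v = ext n h v" using h2 e2 by simp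
    qed
    define k where "k = (\<lambda>v. h' v + ext n h v)"
    have ksupp: "k \<in> supp_on {v. length v = n}"
    proof -
      have "\<And>v. length v \<noteq> n \<Longrightarrow> k v = 0"
      proof -
        fix v :: "bool list" assume "length v \<noteq> n"
        then show "k v = 0" using agree[of v] hs[of v] es[of v] by (cases "length v < n") (auto simp: k_def)
      qed
      then show ?thesis by (auto simp: supp_on_def)
    qed
    have kwin: "\<forall>w. length w = Suc n - d \<longrightarrow> trunc d (shift k w) \<in> L0"
    proof (intro allI impI)
      fix w :: "bool list" assume lw: "length w = Suc n - d"
      have a: "trunc d (shift h' w) \<in> S" "trunc d (shift (ext n h) w) \<in> S" using hS eS lw n by auto
      have "(\<lambda>v. trunc d (shift h' w) v + trunc d (shift (ext n h) w) v) \<in> S"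
        using a by (rule S_same_top) (use agree lw n in \<open>auto simp: trunc_def shift_def\<close>)
      moreover have "(\<lambda>v. trunc d (shift h' w) v + trunc d (shift (ext n h) w) v) = trunc d (shift k w)"
        by (auto simp: trunc_def shift_def k_def)
      moreover have "\<And>v. length v < d - 1 \<Longrightarrow> trunc d (shift k w) v = 0"
        using ksupp lw n by (auto simp: trunc_def shift_def supp_on_def)
      ultimately show "trunc d (shift k w) \<in> L0" by (auto simp: L0_def)
    qed
    have "k \<in> Kn n" using ksupp kwin by (simp add: Kn_def)
    moreover have "h' = (\<lambda>v. ext n h v + k v)" by (simp add: k_def fun_eq_iff add.commute add.left_commute)
    ultimately show "h' \<in> (\<lambda>k v. ext n h v + k v) ` Kn n" by blast
  qed
  show "(\<lambda>k v. ext n h v + k v) ` Kn n \<subseteq> {h' \<in> Cset (Suc n). trunc n h' = h}"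
  proof
    fix h' assume "h' \<in> (\<lambda>k v. ext n h v + k v) ` Kn n"
    then obtain k where k: "k \<in> Kn n" "h' = (\<lambda>v. ext n h v + k v)" by blast
    have ks: "\<And>v. length v \<noteq> n \<Longrightarrow> k v = 0" using k(1) by (auto simp: Kn_def supp_on_def)
    have "h' \<in> supp_on {v. length v < Suc n}" using k(2) es ks by (auto simp: supp_on_def)
    moreover have "\<forall>w. length w + d \<le> Suc n \<longrightarrow> trunc d (shift h' w) \<in> S"
    proof (intro allI impI)
      fix w :: "bool list" assume lw: "length w + d \<le> Suc n"
      show "trunc d (shift h' w) \<in> S"
      proof (cases "length w + d \<le> n")
        case True
        have "trunc d (shift h' w) = trunc d (shift (ext n h) w)"
          using True ks k(2) by (auto simp: trunc_def shift_def fun_eq_iff)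
        then show ?thesis using eS lw by simp
      next
        case False
        then have lw': "length w = Suc n - d" using lw by simp
        have "trunc d (shift k w) \<in> L0" using k(1) lw' by (auto simp: Kn_def)
        then have "(\<lambda>v. trunc d (shift (ext n h) w) v + trunc d (shift k w) v) \<in> S"
          using S_add_L0 eS lw by blast
        moreover have "(\<lambda>v. trunc d (shift (ext n h) w) v + trunc d (shift k w) v) = trunc d (shift h' w)"
          using k(2) by (auto simp: trunc_def shift_def)
        ultimately show ?thesis by simp
      qed
    qed
    moreover have "trunc n h' = h"
    proof
      fix v :: "bool list"
      have t: "trunc n (ext n h) v = h v" using e2 by simp
      show "trunc n h' v = h v"
      proof (cases "length v < n")
        case True then show ?thesis using t ks[of v] k(2) by (simp add: trunc_def)
      next
        case False then show ?thesis using t by (simp add: trunc_def)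
      qed
    qed
    ultimately show "h' \<in> {h' \<in> Cset (Suc n). trunc n h' = h}" by (simp add: Cset_def)
  qed
qed


lemma card_Kn:
  assumes n: "d \<le> n" shows "card (Kn n) = card L0 ^ 2 ^ (Suc n - d)"
proof -
  define p where "p = Suc n - d"
  define W where "W = {w :: bool list. length w = p}"
  define g where "g = (\<lambda>k. restrict (\<lambda>w. trunc d (shift k w)) W)"
  define g' where "g' = (\<lambda>F :: bool list \<Rightarrow> bool list \<Rightarrow> bit. \<lambda>x. if length x = n then F (take p x) (drop p x) else 0)"
  have pn: "p + (d - 1) = n" using n d1 by (simp add: p_def)
  have win_g': "\<And>F w. F \<in> PiE W (\<lambda>_. L0) \<Longrightarrow> w \<in> W \<Longrightarrow> trunc d (shift (g' F) w) = F w"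
  proof -
    fix F w assume F: "F \<in> PiE W (\<lambda>_. L0)" and w: "w \<in> W"
    have FL: "F w \<in> L0" using F w by auto
    show "trunc d (shift (g' F) w) = F w"
    proof
      fix v :: "bool list"
      show "trunc d (shift (g' F) w) v = F w v"
      proof (cases "length v = d - 1")
        case True
        then show ?thesis using w pn d1 by (simp add: trunc_def shift_def g'_def W_def)
      next
        case False
        then have "F w v = 0" using L0_level[OF FL] by simp
        moreover have "length (w @ v) \<noteq> n" using False w pn by (simp add: W_def)
        ultimately show ?thesis by (simp add: trunc_def shift_def g'_def)
      qed
    qed
  qed
  have "bij_betw g (Kn n) (PiE W (\<lambda>_. L0))"
  proof (rule bij_betw_byWitness[where f' = g'])
    show "\<forall>k\<in>Kn n. g' (g k) = k"
    proof
      fix k assume k: "k \<in> Kn n"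
      have ks: "\<And>v. length v \<noteq> n \<Longrightarrow> k v = 0" using k by (auto simp: Kn_def supp_on_def)
      show "g' (g k) = k"
      proof
        fix x :: "bool list"
        show "g' (g k) x = k x"
        proof (cases "length x = n")
          case True
          have "take p x \<in> W" using True pn by (simp add: W_def)
          moreover have "length (drop p x) < d" using True pn d1 by simp
          ultimately show ?thesis using True by (simp add: g'_def g_def trunc_def shift_def)
        next
          case False then show ?thesis using ks by (simp add: g'_def)
        qed
      qed
    qed
    show "\<forall>F\<in>PiE W (\<lambda>_. L0). g (g' F) = F"
    proof
      fix F assume F: "F \<in> PiE W (\<lambda>_. L0)"
      show "g (g' F) = F"
      proof
        fix w show "g (g' F) w = F w"
        proof (cases "w \<in> W")
          case True then show ?thesis using win_g'[OF F True] by (simp add: g_def)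
        next
          case False then show ?thesis using F by (simp add: g_def PiE_def extensional_def)
        qed
      qed
    qed
    show "g ` Kn n \<subseteq> PiE W (\<lambda>_. L0)"
    proof
      fix F assume "F \<in> g ` Kn n"
      then obtain k where k: "k \<in> Kn n" "F = g k" by blast
      then show "F \<in> PiE W (\<lambda>_. L0)" by (auto simp: g_def Kn_def W_def p_def)
    qed
    show "g' ` PiE W (\<lambda>_. L0) \<subseteq> Kn n"
    proof
      fix k assume "k \<in> g' ` PiE W (\<lambda>_. L0)"
      then obtain F where F: "F \<in> PiE W (\<lambda>_. L0)" "k = g' F" by blast
      have "k \<in> supp_on {v. length v = n}" using F(2) by (auto simp: supp_on_def g'_def)
      moreover have "\<forall>w. length w = Suc n - d \<longrightarrow> trunc d (shift k w) \<in> L0"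
      proof (intro allI impI)
        fix w :: "bool list" assume "length w = Suc n - d"
        then have w: "w \<in> W" by (simp add: W_def p_def)
        then show "trunc d (shift k w) \<in> L0" using win_g'[OF F(1) w] F by auto
      qed
      ultimately show "k \<in> Kn n" by (simp add: Kn_def)
    qed
  qed
  then have "card (Kn n) = card (PiE W (\<lambda>_. L0))" by (rule bij_betw_same_card)
  also have "\<dots> = card L0 ^ card W" using finite_level[of p] by (simp add: card_PiE W_def)
  also have "card W = 2 ^ (Suc n - d)" using card_level by (simp add: W_def p_def)
  finally show ?thesis .
qed

lemma finite_Cset: "finite (Cset n)"
  by (rule finite_subset[OF _ finite_supp_lt[of n]]) (auto simp: Cset_def)

lemma card_step:
  assumes n: "d \<le> n" shows "card (Cset (Suc n)) = card (Cset n) * card L0 ^ 2 ^ (Suc n - d)"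
proof -
  let ?F = "\<lambda>h. {h' \<in> Cset (Suc n). trunc n h' = h}"
  have U: "Cset (Suc n) = (\<Union>h\<in>Cset n. ?F h)"
  proof
    show "Cset (Suc n) \<subseteq> (\<Union>h\<in>Cset n. ?F h)"
    proof
      fix h' assume h': "h' \<in> Cset (Suc n)"
      then have "h' \<in> ?F (trunc n h')" by simp
      moreover have "trunc n h' \<in> Cset n" using Cset_restrict[OF h'] .
      ultimately show "h' \<in> (\<Union>h\<in>Cset n. ?F h)" by (rule UN_I[rotated])
    qed
    show "(\<Union>h\<in>Cset n. ?F h) \<subseteq> Cset (Suc n)" by auto
  qed
  have finF: "\<And>h. finite (?F h)" using finite_Cset[of "Suc n"] by simp
  have disj: "\<forall>h\<in>Cset n. \<forall>h2\<in>Cset n. h \<noteq> h2 \<longrightarrow> ?F h \<inter> ?F h2 = {}" by auto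
  have cF: "\<And>h. h \<in> Cset n \<Longrightarrow> card (?F h) = card L0 ^ 2 ^ (Suc n - d)"
  proof -
    fix h assume h: "h \<in> Cset n"
    have "card (?F h) = card ((\<lambda>k v. ext n h v + k v) ` Kn n)" using fiber[OF n h] by simp
    also have "\<dots> = card (Kn n)" by (rule card_image) (auto simp: inj_on_def fun_eq_iff)
    finally show "card (?F h) = card L0 ^ 2 ^ (Suc n - d)" using card_Kn[OF n] by simp
  qed
  have "card (Cset (Suc n)) = card (\<Union>h\<in>Cset n. ?F h)" by (rule arg_cong[OF U])
  also have "\<dots> = (\<Sum>h\<in>Cset n. card (?F h))"
    by (rule card_UN_disjoint[OF finite_Cset]) (use finF disj in auto)
  also have "\<dots> = (\<Sum>h\<in>Cset n. card L0 ^ 2 ^ (Suc n - d))" using cF by simp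
  finally show ?thesis by simp
qed

lemma card_Cset:
  assumes n: "d \<le> n" shows "card (Cset n) = card S * card L0 ^ (2 ^ (Suc n - d) - 2)"
  using n
proof (induction n rule: dec_induct)
  case base
  have "Suc d - d = 1" by simp
  then show ?case using Cset_d by simp
next
  case (step m)
  have e: "Suc (Suc m) - d = Suc (Suc m - d)" using step.hyps by simp
  have "(2::nat) ^ 1 \<le> 2 ^ (Suc m - d)" by (rule power_increasing) (use step.hyps in auto)
  then have ge: "(2::nat) \<le> 2 ^ (Suc m - d)" by simp
  have "card (Cset (Suc m)) = card S * card L0 ^ (2 ^ (Suc m - d) - 2) * card L0 ^ 2 ^ (Suc m - d)"
    using card_step[OF step.hyps(1)] step.IH by simp
  also have "\<dots> = card S * card L0 ^ (2 ^ (Suc m - d) - 2 + 2 ^ (Suc m - d))"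
    by (simp add: power_add)
  also have "2 ^ (Suc m - d) - 2 + 2 ^ (Suc m - d) = 2 ^ (Suc (Suc m) - d) - (2::nat)"
    using ge by (simp add: e)
  finally show ?case .
qed

end

lemma lim0: "(\<lambda>n::nat. 1 / ((2::real) ^ n - 1)) \<longlonglongrightarrow> 0"
proof -
  have "LIM n sequentially. real n :> at_top" by (rule filterlim_real_sequentially)
  moreover have "\<forall>\<^sub>F n in sequentially. real n \<le> (-1) + (2::real) ^ n"
  proof (rule eventually_sequentiallyI[of 0])
    fix n :: nat
    have "n < 2 ^ n" by (rule less_exp)
    then have "real n + 1 \<le> real (2 ^ n)" by linarith
    then show "real n \<le> (-1) + (2::real) ^ n" by simp
  qed
  ultimately have "LIM n sequentially. (-1) + (2::real) ^ n :> at_top" by (rule filterlim_at_top_mono)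
  then have "(\<lambda>n. inverse ((-1) + (2::real) ^ n)) \<longlonglongrightarrow> 0" by (rule tendsto_inverse_0_at_top)
  then show ?thesis by (simp add: divide_inverse)
qed

lemma lim1: "(\<lambda>n::nat. (2::real) ^ n / (2 ^ n - 1)) \<longlonglongrightarrow> 1"
proof -
  have "(\<lambda>n::nat. 1 + 1 / ((2::real) ^ n - 1)) \<longlonglongrightarrow> 1 + 0" by (intro tendsto_add tendsto_const lim0)
  then have a: "(\<lambda>n::nat. 1 + 1 / ((2::real) ^ n - 1)) \<longlonglongrightarrow> 1" by simp
  have "\<forall>\<^sub>F n in sequentially. 1 + 1 / ((2::real) ^ n - 1) = 2 ^ n / (2 ^ n - 1)"
  proof (rule eventually_sequentiallyI[of 1])
    fix n :: nat assume "1 \<le> n"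
    then have "(2::real) ^ 1 \<le> 2 ^ n" by (intro power_increasing) auto
    then have "(2::real) ^ n - 1 \<noteq> 0" by simp
    then show "1 + 1 / ((2::real) ^ n - 1) = 2 ^ n / (2 ^ n - 1)" by (simp add: field_simps)
  qed
  with a show ?thesis by (rule Lim_transform_eventually)
qed


context epg begin

lemma card_restr: assumes n: "d \<le> n" shows "card (restr n ` GP d P) = card (Cset n)"
proof -
  have "restr n ` GP d P = (\<lambda>f. restr n (act f)) ` valid d S" by (simp add: GP_eq image_image)
  also have "\<dots> = (\<lambda>f. restr n (act (trunc n f))) ` valid d S" by (simp add: restr_act_trunc)
  also have "\<dots> = (\<lambda>h. restr n (act h)) ` (trunc n ` valid d S)" by (simp add: image_image)
  also have "\<dots> = (\<lambda>h. restr n (act h)) ` Cset n" using C_eq[OF n] by simp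
  finally have e: "restr n ` GP d P = (\<lambda>h. restr n (act h)) ` Cset n" .
  have tr: "\<And>h. h \<in> Cset n \<Longrightarrow> trunc n h = h"
    by (auto simp: Cset_def supp_on_def trunc_def fun_eq_iff)
  have "inj_on (\<lambda>h. restr n (act h)) (Cset n)"
  proof (rule inj_onI)
    fix h1 h2 assume "h1 \<in> Cset n" "h2 \<in> Cset n" "restr n (act h1) = restr n (act h2)"
    then show "h1 = h2" using tr restr_act_eq_iff by metis
  qed
  then show ?thesis unfolding e by (rule card_image)
qed

lemma card_S_pos: "0 < card S" using finite_S S_zero card_gt_0_iff by blast
lemma card_L0_pos: "0 < card L0"
proof -
  have "(\<lambda>_. 0) \<in> L0" using S_zero by (simp add: L0_def)
  then show ?thesis using finite_L0 card_gt_0_iff by blast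
qed

lemma Hdim_eq: "Hdim (GP d P) = ereal (log 2 (card L0) / 2 ^ (d - 1))"
proof -
  define A where "A = card S"
  define B where "B = card L0"
  define a where "a = log 2 (real A)"
  define b where "b = log 2 (real B)"
  have A0: "0 < A" and B0: "0 < B" using card_S_pos card_L0_pos by (simp_all add: A_def B_def)
  define R where "R = (\<lambda>n. log 2 (real (card (restr n ` GP d P))) / log 2 (real (card (aut_fin n))))"
  define f where "f = (\<lambda>n::nat. (b / 2 ^ (d - 1)) * (2 ^ n / (2 ^ n - 1)) + (a - 2 * b) * (1 / ((2::real) ^ n - 1)))"
  have ev: "\<forall>\<^sub>F n in sequentially. f n = R n"
  proof (rule eventually_sequentiallyI[of d])
    fix n assume n: "d \<le> n"
    define e where "e = 2 ^ (Suc n - d) - (2::nat)"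
    have "card (restr n ` GP d P) = A * B ^ e" using card_restr[OF n] card_Cset[OF n] by (simp add: A_def B_def e_def)
    then have num: "log 2 (real (card (restr n ` GP d P))) = a + real e * b"
      using A0 B0 by (simp add: a_def b_def log_mult log_nat_power)
    have "log 2 (real (card (aut_fin n))) = log 2 ((2::real) ^ (2 ^ n - 1))"
      by (simp add: card_aut_fin)
    also have "\<dots> = real (2 ^ n - 1::nat)" by (rule log_pow_cancel) simp_all
    also have "\<dots> = 2 ^ n - 1" by (simp add: of_nat_diff)
    finally have den: "log 2 (real (card (aut_fin n))) = 2 ^ n - 1" .
    have "(2::nat) ^ 1 \<le> 2 ^ (Suc n - d)" by (rule power_increasing) (use n in auto)
    then have re: "real e = 2 ^ (Suc n - d) - 2" by (simp add: e_def of_nat_diff)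
    have p: "(2::real) ^ n = 2 ^ (Suc n - d) * 2 ^ (d - 1)"
    proof -
      have "n = (Suc n - d) + (d - 1)" using n d1 by simp
      then show ?thesis by (metis power_add)
    qed
    have "(2::real) ^ 1 \<le> 2 ^ n" by (rule power_increasing) (use n d1 in auto)
    then have nz: "(2::real) ^ n - 1 \<noteq> 0" by simp
    have "R n = (a + (2 ^ (Suc n - d) - 2) * b) / (2 ^ n - 1)" by (simp add: R_def num den re)
    also have "\<dots> = f n"
    proof -
      have alg: "\<And>X Q D::real. Q \<noteq> 0 \<Longrightarrow> D = X * Q - 1 \<Longrightarrow> D \<noteq> 0 \<Longrightarrow>
          (a + (X - 2) * b) / D = (b / Q) * (X * Q / D) + (a - 2 * b) * (1 / D)"
        by (simp add: field_simps)
      show ?thesis unfolding f_def p using alg[of "2 ^ (d - 1)" _ "2 ^ (Suc n - d)"] nz p by simp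
    qed
    finally show "f n = R n" by simp
  qed
  have "f \<longlonglongrightarrow> (b / 2 ^ (d - 1)) * 1 + (a - 2 * b) * 0"
    unfolding f_def by (intro tendsto_add tendsto_mult tendsto_const lim0 lim1)
  then have "f \<longlonglongrightarrow> b / 2 ^ (d - 1)" by simp
  then have "R \<longlonglongrightarrow> b / 2 ^ (d - 1)" using ev by (rule Lim_transform_eventually)
  then have "(\<lambda>n. ereal (R n)) \<longlonglongrightarrow> ereal (b / 2 ^ (d - 1))" by (rule tendsto_ereal)
  then have "liminf (\<lambda>n. ereal (R n)) = ereal (b / 2 ^ (d - 1))" by (intro lim_imp_Liminf) simp_all
  then show ?thesis by (simp add: Hdim_def R_def b_def B_def)
qed

lemma cardL0_from_Hdim:
  assumes d2: "2 \<le> d" and H: "Hdim (GP d P) = ereal (1 - 2 / 2 ^ (d - 1))"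
  shows "card L0 = 2 ^ (2 ^ (d - 1) - 2)"
proof -
  have "log 2 (card L0) / 2 ^ (d - 1) = 1 - 2 / 2 ^ (d - 1)" using H Hdim_eq by simp
  then have l: "log 2 (card L0) = 2 ^ (d - 1) - 2" by (simp add: field_simps)
  have "(2::nat) ^ 1 \<le> 2 ^ (d - 1)" by (rule power_increasing) (use d2 in auto)
  then have r: "real (2 ^ (d - 1) - 2::nat) = 2 ^ (d - 1) - 2" by (simp add: of_nat_diff)
  have "real (card L0) = 2 powr (log 2 (card L0))" using card_L0_pos by simp
  also have "\<dots> = 2 powr (real (2 ^ (d - 1) - 2::nat))" using l r by simp
  also have "\<dots> = real ((2::nat) ^ (2 ^ (d - 1) - 2))" by (simp add: powr_realpow)
  finally show ?thesis by (simp only: of_nat_eq_iff)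
qed

end


theorem theorem4:
  fixes d :: nat and P :: "(bool list \<Rightarrow> bool list) set"
  assumes "2 \<le> d"
    and "essential_pattern_group d P"
    and "defined_by_patterns_of_size d (GP d P)"
    and "Hdim (GP d P) = ereal (1 - 2 / 2 ^ (d - 1))"
  shows "additive_portraits (GP d P)"
proof -
  interpret epg d P by (rule epg.intro) (rule assms(2))
  have d2: "2 \<le> d" by (rule assms(1))
  have cL: "card L0 = 2 ^ (2 ^ (d - 1) - 2)" by (rule cardL0_from_Hdim[OF d2 assms(4)])
  have mini: "GP d P \<noteq> GP (d - 1) P'"
  proof -
    have "d - 1 < d" using d2 by simp
    then show ?thesis using assms(3) P'_ep[OF d2] by (auto simp: defined_by_patterns_of_size_def)
  qed
  have K_full: "\<forall>k\<in>supp_on {v. length v = d - 2}. \<exists>s\<in>S. trunc (d - 1) s = k"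
    using min_full[OF d2 cL mini] by blast
  have top: "\<forall>\<sigma>\<in>supp_on {v. length v < d - 1}. \<exists>s\<in>S. trunc (d - 1) s = \<sigma>"
    using top_full_aux[OF d2 K_full, of "d - 1"] by simp
  interpret epg2 d P
  proof (unfold_locales)
    show "2 \<le> d" by (rule d2)
    show "\<forall>\<sigma>\<in>supp_on {v. length v < d - 1}. \<exists>s\<in>lab ` P. trunc (d - 1) s = \<sigma>"
      using top by (simp add: S_def)
    show "card {s \<in> lab ` P. \<forall>v. length v < d - 1 \<longrightarrow> s v = 0} = 2 ^ (2 ^ (d - 1) - 2)"
      using cL by (simp add: L0_def S_def)
  qed
  show ?thesis by (rule additive_from_S) (rule S_add)
qed


end
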